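(* Let $E,F$ be vector lattices with $F$ Dedekind complete and let $\mathfrak{A}$ be an upward saturated family of admissible subsets of $E$. Then $\pi^{\mathfrak{A}}:=\inf\{\pi^{D}:\ D\in\mathfrak{A}\}$ (infimum in the Boolean algebra of band projections of $\mathcal{U}(E,F)$) is the band projection of $\mathcal{U}(E,F)$ onto $\mathcal{U}_{\mathfrak{A}}(E,F)^{\perp}$, where $\mathcal{U}_{\mathfrak{A}}(E,F)=\{T\in\mathcal{U}(E,F):\ \mathcal{N}_{T}\in\mathfrak{A}\}$.
   Context: For vector lattices $E,F$, an operator (not necessarily linear) $T:E\to F$ is orthogonally additive if $T(x+y)=T(x)+T(y)$ whenever $x\perp y$; positive if $T(x)\geq0$ for all $x$; order bounded if it maps order bounded sets to order bounded sets. Abstract Uryson operators are the orthogonally additive order bounded operators; $\mathcal{U}(E,F)$ is their space, $\mathcal{U}_{+}(E,F)$ the positive ones, ordered by $S\leq T$ iff $T-S$ is positive; for $F$ Dedekind complete it is a Dedekind complete vector lattice. An element $z$ is a fragment of $x$, written $z\sqsubseteq x$, if $z\perp(x-z)$. A subset $D\subset E$ is admissible if (1) $x\in D$ and $y\sqsubseteq x$ imply $y\in D$, and (2) $x,y\in D$ with $x\perp y$ imply $x+y\in D$; $AD(E)$ is the set of admissible subsets. For an admissible $D$ and $T\in\mathcal{U}_{+}(E,F)$, $\pi^{D}T(x)=\sup\{T(y): y\sqsubseteq x,\ y\in D\}$; the map $T\mapsto\pi^{D}T$ is (the restriction to positive operators of) a band projection on $\mathcal{U}(E,F)$, also denoted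 $\pi^{D}$. A family $\mathfrak{A}\subset AD(E)$ is upward saturated if $A\in\mathfrak{A}$, $B\in AD(E)$, $B\supset A$ imply $B\in\mathfrak{A}$. For $T\in\mathcal{U}(E,F)$, $\mathcal{N}_{T}=\{e\in E: T(e)=0\}$. *)

theory Defs
  imports Complex_Main
begin

text \<open>Vector lattices E: type class ordered_real_vector + lattice.
  Dedekind complete vector lattices F: ordered_real_vector + conditionally_complete_lattice.\<close>

definition vabs :: "'a::{ordered_real_vector,lattice} \<Rightarrow> 'a" where
  "vabs x = sup x (- x)"

definition disj :: "'a::{ordered_real_vector,lattice} \<Rightarrow> 'a \<Rightarrow> bool" where
  "disj x y \<longleftrightarrow> inf (vabs x) (vabs y) = 0"

definition fragment :: "'a::{ordered_real_vector,lattice} \<Rightarrow> 'a \<Rightarrow> bool" where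
  "fragment z x \<longleftrightarrow> disj z (x - z)"

definition admissible :: "'a::{ordered_real_vector,lattice} set \<Rightarrow> bool" where
  "admissible D \<longleftrightarrow> (\<forall>x\<in>D. \<forall>y. fragment y x \<longrightarrow> y \<in> D)
      \<and> (\<forall>x\<in>D. \<forall>y\<in>D. disj x y \<longrightarrow> x + y \<in> D)"

definition upward_saturated :: "'a::{ordered_real_vector,lattice} set set \<Rightarrow> bool" where
  "upward_saturated AA \<longleftrightarrow> (\<forall>A\<in>AA. \<forall>B. admissible B \<and> A \<subseteq> B \<longrightarrow> B \<in> AA)"

definition orth_additive ::
  "('a::{ordered_real_vector,lattice} \<Rightarrow> 'b::{ordered_real_vector,lattice}) \<Rightarrow> bool" where
  "orth_additive T \<longleftrightarrow> (\<forall>x y. disj x y \<longrightarrow> T (x + y) = T x + T y)"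

definition order_bounded_op ::
  "('a::{ordered_real_vector,lattice} \<Rightarrow> 'b::{ordered_real_vector,lattice}) \<Rightarrow> bool" where
  "order_bounded_op T \<longleftrightarrow>
     (\<forall>S. (\<exists>a b. \<forall>x\<in>S. a \<le> x \<and> x \<le> b) \<longrightarrow> (\<exists>c d. \<forall>x\<in>S. c \<le> T x \<and> T x \<le> d))"

definition uryson ::
  "('a::{ordered_real_vector,lattice} \<Rightarrow> 'b::{ordered_real_vector,lattice}) set" where
  "uryson = {T. orth_additive T \<and> order_bounded_op T}"

definition op_pos :: "('a \<Rightarrow> 'b::{ordered_real_vector,lattice}) \<Rightarrow> bool" where
  "op_pos T \<longleftrightarrow> (\<forall>x. 0 \<le> T x)"

definition op_le :: "('a \<Rightarrow> 'b::{ordered_real_vector,lattice}) \<Rightarrow> ('a \<Rightarrow> 'b) \<Rightarrow> bool" where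
  "op_le S T \<longleftrightarrow> op_pos (\<lambda>x. T x - S x)"

definition is_lub_U ::
  "('a::{ordered_real_vector,lattice} \<Rightarrow> 'b::{ordered_real_vector,lattice}) set \<Rightarrow> ('a \<Rightarrow> 'b) \<Rightarrow> bool" where
  "is_lub_U A T \<longleftrightarrow> T \<in> uryson \<and> (\<forall>S\<in>A. op_le S T)
      \<and> (\<forall>R\<in>uryson. (\<forall>S\<in>A. op_le S R) \<longrightarrow> op_le T R)"

definition is_glb_U ::
  "('a::{ordered_real_vector,lattice} \<Rightarrow> 'b::{ordered_real_vector,lattice}) set \<Rightarrow> ('a \<Rightarrow> 'b) \<Rightarrow> bool" where
  "is_glb_U A T \<longleftrightarrow> T \<in> uryson \<and> (\<forall>S\<in>A. op_le T S)
      \<and> (\<forall>R\<in>uryson. (\<forall>S\<in>A. op_le R S) \<longrightarrow> op_le R T)"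

definition usup ::
  "('a::{ordered_real_vector,lattice} \<Rightarrow> 'b::{ordered_real_vector,lattice}) \<Rightarrow> ('a \<Rightarrow> 'b) \<Rightarrow> ('a \<Rightarrow> 'b)" where
  "usup S T = (THE R. is_lub_U {S, T} R)"

definition uinf ::
  "('a::{ordered_real_vector,lattice} \<Rightarrow> 'b::{ordered_real_vector,lattice}) \<Rightarrow> ('a \<Rightarrow> 'b) \<Rightarrow> ('a \<Rightarrow> 'b)" where
  "uinf S T = (THE R. is_glb_U {S, T} R)"

definition uabs ::
  "('a::{ordered_real_vector,lattice} \<Rightarrow> 'b::{ordered_real_vector,lattice}) \<Rightarrow> ('a \<Rightarrow> 'b)" where
  "uabs T = usup T (\<lambda>x. - T x)"

definition upos ::
  "('a::{ordered_real_vector,lattice} \<Rightarrow> 'b::{ordered_real_vector,lattice}) \<Rightarrow> ('a \<Rightarrow> 'b)" where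
  "upos T = usup T (\<lambda>x. 0)"

definition uneg ::
  "('a::{ordered_real_vector,lattice} \<Rightarrow> 'b::{ordered_real_vector,lattice}) \<Rightarrow> ('a \<Rightarrow> 'b)" where
  "uneg T = usup (\<lambda>x. - T x) (\<lambda>x. 0)"

definition udisj ::
  "('a::{ordered_real_vector,lattice} \<Rightarrow> 'b::{ordered_real_vector,lattice}) \<Rightarrow> ('a \<Rightarrow> 'b) \<Rightarrow> bool" where
  "udisj S T \<longleftrightarrow> uinf (uabs S) (uabs T) = (\<lambda>x. 0)"

definition uorth ::
  "('a::{ordered_real_vector,lattice} \<Rightarrow> 'b::{ordered_real_vector,lattice}) set \<Rightarrow> ('a \<Rightarrow> 'b) set" where
  "uorth A = {T \<in> uryson. \<forall>S\<in>A. udisj S T}"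

definition uband ::
  "('a::{ordered_real_vector,lattice} \<Rightarrow> 'b::{ordered_real_vector,lattice}) set \<Rightarrow> bool" where
  "uband B \<longleftrightarrow> B \<subseteq> uryson \<and> (\<lambda>x. 0) \<in> B
     \<and> (\<forall>S\<in>B. \<forall>T\<in>B. (\<lambda>x. S x + T x) \<in> B)
     \<and> (\<forall>c. \<forall>S\<in>B. (\<lambda>x. c *\<^sub>R S x) \<in> B)
     \<and> (\<forall>S\<in>uryson. \<forall>T\<in>B. op_le (uabs S) (uabs T) \<longrightarrow> S \<in> B)
     \<and> (\<forall>A T. A \<subseteq> B \<and> is_lub_U A T \<longrightarrow> T \<in> B)"

text \<open>P is the (band) projection of U(E,F) onto B: every T in U splits as
  T = P T + (T - P T) with P T in B and T - P T in the disjoint complement of B.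
  Only the values of P on U(E,F) are relevant.\<close>
definition proj_onto ::
  "(('a::{ordered_real_vector,lattice} \<Rightarrow> 'b::{ordered_real_vector,lattice}) \<Rightarrow> ('a \<Rightarrow> 'b))
     \<Rightarrow> ('a \<Rightarrow> 'b) set \<Rightarrow> bool" where
  "proj_onto P B \<longleftrightarrow> (\<forall>T\<in>uryson. P T \<in> B \<and> (\<lambda>x. T x - P T x) \<in> uorth B)"

definition band_proj ::
  "(('a::{ordered_real_vector,lattice} \<Rightarrow> 'b::{ordered_real_vector,lattice}) \<Rightarrow> ('a \<Rightarrow> 'b)) \<Rightarrow> bool" where
  "band_proj P \<longleftrightarrow> (\<exists>B. uband B \<and> proj_onto P B)"

definition bp_le ::
  "(('a::{ordered_real_vector,lattice} \<Rightarrow> 'b::{ordered_real_vector,lattice}) \<Rightarrow> ('a \<Rightarrow> 'b))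
     \<Rightarrow> (('a \<Rightarrow> 'b) \<Rightarrow> ('a \<Rightarrow> 'b)) \<Rightarrow> bool" where
  "bp_le P Q \<longleftrightarrow> (\<forall>T\<in>uryson. op_pos T \<longrightarrow> op_le (P T) (Q T))"

definition is_inf_bp ::
  "(('a::{ordered_real_vector,lattice} \<Rightarrow> 'b::{ordered_real_vector,lattice}) \<Rightarrow> ('a \<Rightarrow> 'b)) set
     \<Rightarrow> (('a \<Rightarrow> 'b) \<Rightarrow> ('a \<Rightarrow> 'b)) \<Rightarrow> bool" where
  "is_inf_bp PP P \<longleftrightarrow> band_proj P \<and> (\<forall>Q\<in>PP. bp_le P Q)
     \<and> (\<forall>R. band_proj R \<and> (\<forall>Q\<in>PP. bp_le R Q) \<longrightarrow> bp_le R P)"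

text \<open>pi^D on positive operators: sup of T(y) over fragments y of x lying in D
  (0 is included, which is harmless since T(0)=0 and makes the empty D give 0).\<close>
definition piD_pos ::
  "'a::{ordered_real_vector,lattice} set \<Rightarrow> ('a \<Rightarrow> 'b::{ordered_real_vector,conditionally_complete_lattice})
     \<Rightarrow> ('a \<Rightarrow> 'b)" where
  "piD_pos D T = (\<lambda>x. Sup (insert 0 {T y | y. fragment y x \<and> y \<in> D}))"

definition piD ::
  "'a::{ordered_real_vector,lattice} set \<Rightarrow> ('a \<Rightarrow> 'b::{ordered_real_vector,conditionally_complete_lattice})
     \<Rightarrow> ('a \<Rightarrow> 'b)" where
  "piD D T = (\<lambda>x. piD_pos D (upos T) x - piD_pos D (uneg T) x)"

definition null_set :: "('a \<Rightarrow> 'b::zero) \<Rightarrow> 'a set" where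
  "null_set T = {e. T e = 0}"

definition U_fam ::
  "'a::{ordered_real_vector,lattice} set set \<Rightarrow> ('a \<Rightarrow> 'b::{ordered_real_vector,lattice}) set" where
  "U_fam AA = {T \<in> uryson. null_set T \<in> AA}"

end

theory Submission
  imports Defs
begin


lemma add_inf_l: "(a::'a::{ordered_ab_group_add,lattice}) + inf b c = inf (a + b) (a + c)"
proof (rule order.antisym)
  show "a + inf b c \<le> inf (a + b) (a + c)" by (simp add: add_left_mono)
  have "inf (a + b) (a + c) - a \<le> b" by (simp add: diff_le_eq add.commute)
  moreover have "inf (a + b) (a + c) - a \<le> c" by (simp add: diff_le_eq add.commute)
  ultimately have "inf (a + b) (a + c) - a \<le> inf b c" by simp
  then show "inf (a + b) (a + c) \<le> a + inf b c" by (metis diff_le_eq add.commute)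
qed

lemma add_sup_l: "(a::'a::{ordered_ab_group_add,lattice}) + sup b c = sup (a + b) (a + c)"
proof (rule order.antisym)
  show "sup (a + b) (a + c) \<le> a + sup b c" by (simp add: add_left_mono)
  have "b \<le> sup (a + b) (a + c) - a" by (simp add: le_diff_eq add.commute)
  moreover have "c \<le> sup (a + b) (a + c) - a" by (simp add: le_diff_eq add.commute)
  ultimately have "sup b c \<le> sup (a + b) (a + c) - a" by simp
  then show "a + sup b c \<le> sup (a + b) (a + c)" by (simp add: le_diff_eq add.commute)
qed

lemma add_inf_r: "inf (b::'a::{ordered_ab_group_add,lattice}) c + a = inf (b + a) (c + a)"
  using add_inf_l[of a b c] by (simp add: add.commute)
lemma add_sup_r: "sup (b::'a::{ordered_ab_group_add,lattice}) c + a = sup (b + a) (c + a)"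
  using add_sup_l[of a b c] by (simp add: add.commute)

lemma neg_sup: "- sup (a::'a::{ordered_ab_group_add,lattice}) b = inf (- a) (- b)"
proof (rule order.antisym)
  show "- sup a b \<le> inf (- a) (- b)" by simp
  have "a \<le> - inf (- a) (- b)" "b \<le> - inf (- a) (- b)"
    by (subst le_minus_iff, simp)+
  then show "inf (- a) (- b) \<le> - sup a b" by (simp add: le_minus_iff)
qed

lemma neg_inf: "- inf (a::'a::{ordered_ab_group_add,lattice}) b = sup (- a) (- b)"
  using neg_sup[of "-a" "-b"] by (metis minus_minus)

lemma sup_plus_inf: "sup (a::'a::{ordered_ab_group_add,lattice}) b + inf a b = a + b"
proof -
  have "inf a b = a + b + inf (- b) (- a)"
    using add_inf_l[of "a+b" "-b" "-a"] by (simp add: algebra_simps inf_commute)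
  also have "\<dots> = a + b - sup a b" using neg_sup[of b a] by (simp add: sup_commute)
  finally show ?thesis by (simp add: algebra_simps)
qed



lemma half_nonneg: "0 \<le> (a::'a::ordered_real_vector) + a \<Longrightarrow> 0 \<le> a"
proof -
  assume "0 \<le> a + a"
  then have "0 \<le> (1/2::real) *\<^sub>R (a + a)" using scaleR_nonneg_nonneg[of "1/2" "a+a"] by simp
  also have "(1/2::real) *\<^sub>R (a + a) = ((1/2::real) + 1/2) *\<^sub>R a"
    by (simp only: scaleR_add_right scaleR_add_left)
  also have "\<dots> = a" by simp
  finally show ?thesis .
qed

lemma vabs_ge: "x \<le> vabs x" "- x \<le> vabs x" by (auto simp: vabs_def)

lemma vabs_nonneg: "0 \<le> vabs (x::'a::{ordered_real_vector,lattice})"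
proof -
  have "x + - x \<le> vabs x + vabs x" by (rule add_mono[OF vabs_ge(1)[of x] vabs_ge(2)[of x]])
  then have "0 \<le> vabs x + vabs x" by simp
  then show ?thesis by (rule half_nonneg)
qed

lemma vabs_minus[simp]: "vabs (- x) = vabs x" by (simp add: vabs_def sup_commute)
lemma vabs_zero[simp]: "vabs 0 = 0" by (simp add: vabs_def)
lemma vabs_pos[simp]: "0 \<le> x \<Longrightarrow> vabs x = x"
proof -
  assume x: "0 \<le> x"
  then have "- x \<le> x" using order.trans[of "-x" 0 x] by simp
  then show "vabs x = x" unfolding vabs_def by (rule sup.absorb1)
qed

lemma vabs_eq0: "vabs (x::'a::{ordered_real_vector,lattice}) = 0 \<Longrightarrow> x = 0"
proof -
  assume a: "vabs x = 0"
  have "x \<le> 0" "- x \<le> 0" using vabs_ge[of x] a by auto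
  then show "x = 0" by (intro order.antisym) (auto simp: neg_le_0_iff_le)
qed

lemma vabs_le_iff: "vabs x \<le> c \<longleftrightarrow> x \<le> c \<and> - x \<le> c" by (simp add: vabs_def)

lemma vabs_triangle: "vabs (x + y) \<le> vabs x + vabs (y::'a::{ordered_real_vector,lattice})"
  unfolding vabs_le_iff using add_mono[OF vabs_ge(1)[of x] vabs_ge(1)[of y]]
    add_mono[OF vabs_ge(2)[of x] vabs_ge(2)[of y]] by (simp_all add: algebra_simps)

lemma vabs_diff: "vabs (x - y) \<le> vabs x + vabs (y::'a::{ordered_real_vector,lattice})"
  using vabs_triangle[of x "-y"] by simp

lemma vabs_commute_diff: "vabs (x - y) = vabs (y - (x::'a::{ordered_real_vector,lattice}))"
  using vabs_minus[of "x-y"] by simp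

lemma scaleR_inf:
  fixes a b :: "'a::{ordered_real_vector,lattice}"
  assumes c: "0 < c"
  shows "c *\<^sub>R inf a b = inf (c *\<^sub>R a) (c *\<^sub>R b)"
proof (rule order.antisym)
  show "c *\<^sub>R inf a b \<le> inf (c *\<^sub>R a) (c *\<^sub>R b)" using c by (simp add: scaleR_left_mono)
  define z where "z = inf (c *\<^sub>R a) (c *\<^sub>R b)"
  have "(1/c) *\<^sub>R z \<le> (1/c) *\<^sub>R (c *\<^sub>R a)"
    using c unfolding z_def by (intro scaleR_left_mono) auto
  then have za: "(1/c) *\<^sub>R z \<le> a" using c by simp
  have "(1/c) *\<^sub>R z \<le> (1/c) *\<^sub>R (c *\<^sub>R b)"
    using c unfolding z_def by (intro scaleR_left_mono) auto
  then have zb: "(1/c) *\<^sub>R z \<le> b" using c by simp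
  have "(1/c) *\<^sub>R z \<le> inf a b" using za zb by (rule le_infI)
  then have "c *\<^sub>R ((1/c) *\<^sub>R z) \<le> c *\<^sub>R inf a b"
    using c by (intro scaleR_left_mono) auto
  then show "z \<le> c *\<^sub>R inf a b" using c by simp
qed

lemma inf_add_le:
  fixes a b c :: "'a::{ordered_real_vector,lattice}"
  assumes "0 \<le> a" "0 \<le> b" "0 \<le> c"
  shows "inf a (b + c) \<le> inf a b + inf a c"
proof -
  have "inf a (b + c) \<le> inf (a + c) (b + c)"
    by (rule inf_mono) (use assms in \<open>simp_all add: add_increasing2\<close>)
  also have "\<dots> = inf a b + c" by (rule add_inf_r[symmetric])
  finally have 1: "inf a (b + c) \<le> inf a b + c" .
  have "inf a (b + c) \<le> a" by (rule inf_le1)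
  also have "a \<le> inf a b + a" by (rule add_increasing[OF _ order_refl]) (use assms in simp)
  finally have 2: "inf a (b + c) \<le> inf a b + a" .
  have "inf a (b + c) \<le> inf (inf a b + c) (inf a b + a)" using 1 2 by (rule le_infI)
  also have "\<dots> = inf a b + inf c a" by (rule add_inf_l[symmetric])
  finally show ?thesis by (simp add: inf_commute)
qed



lemma disj_sym: "disj x y \<longleftrightarrow> disj y x" by (simp add: disj_def inf_commute)
lemma disj_zero[simp]: "disj x 0" "disj 0 x" by (simp_all add: disj_def inf.absorb1 inf.absorb2 vabs_nonneg)

lemma disj_neg[simp]: "disj (- x) y \<longleftrightarrow> disj x y" "disj x (- y) \<longleftrightarrow> disj x y"
  by (simp_all add: disj_def)

lemma inf_nonneg: "0 \<le> a \<Longrightarrow> 0 \<le> b \<Longrightarrow> 0 \<le> inf a (b::'a::{ordered_real_vector,lattice})" by (rule le_infI)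

lemma eq0I: "(a::'a::{order,zero}) \<le> 0 \<Longrightarrow> 0 \<le> a \<Longrightarrow> a = 0" by (rule order.antisym)

lemma inf_vabs_nonneg: "0 \<le> inf (vabs u) (vabs v)" by (rule le_infI) (simp_all add: vabs_nonneg)

lemma disj_mono:
  assumes "disj x z" "vabs u \<le> vabs x" shows "disj u z"
proof -
  have "inf (vabs u) (vabs z) \<le> inf (vabs x) (vabs z)" using assms(2) inf_mono by blast
  then show ?thesis using assms(1) unfolding disj_def
    by (intro eq0I inf_vabs_nonneg) simp
qed

lemma disj_add:
  assumes "disj u v" "disj u w" shows "disj u (v + w)"
proof -
  have "inf (vabs u) (vabs (v + w)) \<le> inf (vabs u) (vabs v + vabs w)"
    using vabs_triangle inf_mono by blast
  also have "\<dots> \<le> inf (vabs u) (vabs v) + inf (vabs u) (vabs w)"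
    by (rule inf_add_le) (simp_all add: vabs_nonneg)
  finally show ?thesis using assms unfolding disj_def
    by (intro eq0I inf_vabs_nonneg) simp
qed

lemma disj_scale:
  assumes "disj x z" "vabs u \<le> c *\<^sub>R vabs x" shows "disj u z"
proof (cases "c \<le> 1")
  case True
  have "c *\<^sub>R vabs x \<le> vabs x"
  proof (cases "0 \<le> c")
    case True
    then show ?thesis using \<open>c \<le> 1\<close> scaleR_right_mono[of c 1 "vabs x"] vabs_nonneg by auto
  next
    case False
    then have "c *\<^sub>R vabs x \<le> 0"
      by (simp add: scaleR_nonpos_nonneg vabs_nonneg)
    then show ?thesis using vabs_nonneg order.trans by blast
  qed
  then show ?thesis using assms disj_mono order.trans by blast
next
  case False
  then have c: "0 < c" by simp
  have "inf (vabs u) (vabs z) \<le> inf (c *\<^sub>R vabs x) (c *\<^sub>R vabs z)"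
  proof -
    have "vabs z \<le> c *\<^sub>R vabs z"
      using False scaleR_right_mono[of 1 c "vabs z"] vabs_nonneg by auto
    then show ?thesis using assms(2) inf_mono by blast
  qed
  also have "\<dots> = c *\<^sub>R inf (vabs x) (vabs z)" by (rule scaleR_inf[OF c, symmetric])
  finally show ?thesis using assms(1) unfolding disj_def by (intro eq0I inf_vabs_nonneg) simp
qed

definition pp :: "'a::{ordered_real_vector,lattice} \<Rightarrow> 'a" where "pp x = sup x 0"
definition np :: "'a::{ordered_real_vector,lattice} \<Rightarrow> 'a" where "np x = sup (- x) 0"

lemma pp_np: "pp x - np x = x"
proof -
  have "pp x = x + np x" unfolding pp_def np_def using add_sup_l[of x "-x" 0] by (simp add: sup_commute)
  then show ?thesis by simp
qed

lemma pp_nonneg: "0 \<le> pp x" and np_nonneg: "0 \<le> np x" by (simp_all add: pp_def np_def)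

lemma pp_plus_np: "pp x + np x = vabs x"
proof -
  have "pp x + np x = sup (x + np x) (np x)" unfolding pp_def using add_sup_r[of x 0 "np x"] by simp
  also have "x + np x = sup 0 x" unfolding np_def using add_sup_l[of x "-x" 0] by simp
  also have "sup (sup 0 x) (np x) = sup (vabs x) 0" unfolding np_def vabs_def
    by (simp add: ac_simps)
  also have "\<dots> = vabs x" by (rule sup.absorb1[OF vabs_nonneg])
  finally show ?thesis .
qed

lemma pp_sup_np: "sup (pp x) (np x) = vabs x"
proof -
  have "sup (pp x) (np x) = sup (vabs x) 0" unfolding pp_def np_def vabs_def by (simp add: ac_simps)
  then show ?thesis using sup.absorb1[OF vabs_nonneg] by simp
qed

lemma pp_inf_np: "inf (pp x) (np x) = 0"
  using sup_plus_inf[of "pp x" "np x"] pp_plus_np[of x] pp_sup_np[of x] by simp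

lemma pp_le: "pp x \<le> vabs x" "np x \<le> vabs x"
  using pp_sup_np[of x] by (metis sup.cobounded1 sup.cobounded2)+

lemma vabs_diff_sup_inf: "vabs (p - n) = sup p n - inf p (n::'a::{ordered_real_vector,lattice})"
proof -
  have "sup p n - inf p n = sup p n + sup (- p) (- n)" using neg_inf[of p n] by simp
  also have "\<dots> = sup (sup p n - p) (sup p n - n)" using add_sup_l[of "sup p n" "-p" "-n"] by simp
  also have "sup p n - p = sup 0 (n - p)" using add_sup_r[of p n "-p"] by simp
  also have "sup p n - n = sup (p - n) 0" using add_sup_r[of p n "-n"] by simp
  also have "sup (sup 0 (n - p)) (sup (p - n) 0) = sup (vabs (p - n)) 0"
    unfolding vabs_def by (simp add: ac_simps)
  also have "\<dots> = vabs (p - n)" by (rule sup.absorb1[OF vabs_nonneg])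
  finally show ?thesis by simp
qed

lemma disj_inf0: "disj x y \<Longrightarrow> inf (vabs x) (vabs y) = 0" by (simp add: disj_def)

lemma disj_parts: "disj x y \<Longrightarrow> inf (pp x) (pp y) = 0 \<and> inf (pp x) (np y) = 0 \<and> inf (np x) (pp y) = 0 \<and> inf (np x) (np y) = 0"
proof -
  assume d: "disj x y"
  have "\<And>a b. a \<le> vabs x \<Longrightarrow> b \<le> vabs y \<Longrightarrow> 0 \<le> a \<Longrightarrow> 0 \<le> b \<Longrightarrow> inf a b = 0"
  proof -
    fix a b assume "a \<le> vabs x" "b \<le> vabs y" "0 \<le> a" "0 \<le> b"
    then have "inf a b \<le> inf (vabs x) (vabs y)" using inf_mono by blast
    then show "inf a b = 0" using d \<open>0 \<le> a\<close> \<open>0 \<le> b\<close> unfolding disj_def by (intro eq0I inf_nonneg) simp_all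
  qed
  then show ?thesis using pp_le pp_nonneg np_nonneg by blast
qed

lemma inf_add_zero:
  fixes a b c :: "'a::{ordered_real_vector,lattice}"
  assumes "0 \<le> a" "0 \<le> b" "0 \<le> c" "inf a b = 0" "inf a c = 0"
  shows "inf a (b + c) = 0"
  using inf_add_le[OF assms(1-3)] assms by (intro eq0I inf_nonneg) (simp_all add: add_nonneg_nonneg)

lemma disj_abs_add:
  assumes d: "disj x y" shows "vabs (x + y) = vabs x + vabs y"
proof -
  define P where "P = pp x + pp y"
  define N where "N = np x + np y"
  have xy: "x + y = P - N" unfolding P_def N_def using pp_np[of x] pp_np[of y] by (simp add: algebra_simps)
  have ppn: "inf (pp x) (np x) = 0" "inf (pp y) (np y) = 0" using pp_inf_np by auto
  have dp: "inf (pp x) (pp y) = 0" "inf (pp x) (np y) = 0" "inf (np x) (pp y) = 0" "inf (np x) (np y) = 0"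
    using disj_parts[OF d] by auto
  have nn: "0 \<le> pp x" "0 \<le> pp y" "0 \<le> np x" "0 \<le> np y" using pp_nonneg np_nonneg by auto
  have "inf (pp x) N = 0" unfolding N_def by (rule inf_add_zero) (use nn ppn dp in auto)
  moreover have "inf (pp y) N = 0" unfolding N_def by (rule inf_add_zero) (use nn ppn dp in \<open>auto simp: inf_commute\<close>)
  ultimately have "inf N (pp x) = 0" "inf N (pp y) = 0" by (auto simp: inf_commute)
  then have "inf N P = 0" unfolding P_def by (intro inf_add_zero) (use nn in \<open>auto simp: N_def\<close>)
  then have PN: "inf P N = 0" by (simp add: inf_commute)
  have "vabs (P - N) = sup P N - inf P N" by (rule vabs_diff_sup_inf)
  also have "sup P N = P + N" using sup_plus_inf[of P N] PN by simp
  finally have "vabs (x + y) = P + N" using PN xy by simp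
  also have "\<dots> = vabs x + vabs y" unfolding P_def N_def using pp_plus_np[of x] pp_plus_np[of y]
    by (simp add: algebra_simps)
  finally show ?thesis .
qed

lemma riesz_part:
  fixes a b c :: "'a::{ordered_real_vector,lattice}"
  assumes "0 \<le> c" "c \<le> a + b" "0 \<le> a" "0 \<le> b"
  shows "0 \<le> c - inf c a" "c - inf c a \<le> b" "0 \<le> inf c a" "inf c a \<le> a"
proof -
  have "c - inf c a = c + sup (- c) (- a)" by (simp only: diff_conv_add_uminus neg_inf)
  also have "\<dots> = sup (c + - c) (c + - a)" by (rule add_sup_l)
  also have "\<dots> = sup 0 (c - a)" by (simp only: diff_conv_add_uminus[symmetric] diff_self)
  finally have e: "c - inf c a = sup 0 (c - a)" .
  show "0 \<le> c - inf c a" unfolding e by (rule sup.cobounded1)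
  have "c \<le> b + a" using assms(2) by (simp only: add.commute)
  then have "c - a \<le> b" by (simp only: diff_le_eq)
  then show "c - inf c a \<le> b" unfolding e using assms(4) by (rule_tac le_supI)
  show "0 \<le> inf c a" using assms(1,3) by (rule le_infI)
  show "inf c a \<le> a" by (rule inf.cobounded2)
qed



lemma frag_refl[simp]: "fragment x x" and frag_zero[simp]: "fragment 0 x"
  by (simp_all add: fragment_def)

lemma frag_compl: "fragment y x \<Longrightarrow> fragment (x - y) x"
  by (simp add: fragment_def disj_sym)

lemma frag_abs_add: "fragment y x \<Longrightarrow> vabs x = vabs y + vabs (x - y)"
  using disj_abs_add[of y "x - y"] by (simp add: fragment_def)

lemma frag_abs_le: "fragment y x \<Longrightarrow> vabs y \<le> vabs x"
  using frag_abs_add[of y x] vabs_nonneg[of "x-y"] by (simp add: add_increasing2)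

lemma frag_abs_le2: "fragment y x \<Longrightarrow> vabs (x - y) \<le> vabs x"
  using frag_abs_le[OF frag_compl] by blast

lemma frag_trans:
  assumes zy: "fragment z y" and yx: "fragment y x"
  shows "fragment z x" "disj (x - y) (y - z)"
proof -
  have d1: "disj z (y - z)" "disj y (x - y)" using zy yx by (auto simp: fragment_def)
  have "disj z (x - y)" using disj_mono[OF d1(2) frag_abs_le[OF zy]] .
  then have "disj z ((x - y) + (y - z))" using disj_add d1(1) by blast
  then show "fragment z x" by (simp add: fragment_def)
  have "disj (y - z) (x - y)" using disj_mono[OF d1(2) frag_abs_le[OF frag_compl[OF zy]]] .
  then show "disj (x - y) (y - z)" by (simp add: disj_sym)
qed

lemma frag_bound:
  assumes f: "fragment y x" and ab: "a \<le> x" "x \<le> b"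
  shows "- (vabs a + vabs b) \<le> y \<and> y \<le> vabs a + vabs b"
proof -
  have "x \<le> vabs a + vabs b"
    using ab(2) vabs_ge(1)[of b] add_increasing[OF vabs_nonneg[of a] order_refl[of "vabs b"]] by order
  moreover have "- x \<le> vabs a + vabs b"
  proof -
    have "- x \<le> - a" using ab(1) by simp
    also have "- a \<le> vabs a" by (rule vabs_ge(2))
    also have "vabs a \<le> vabs a + vabs b" using add_increasing2[OF vabs_nonneg[of b] order_refl[of "vabs a"]] .
    finally show ?thesis .
  qed
  ultimately have "vabs x \<le> vabs a + vabs b" unfolding vabs_le_iff by simp
  then have K: "vabs y \<le> vabs a + vabs b" using frag_abs_le[OF f] by order
  have "y \<le> vabs a + vabs b" using vabs_ge(1)[of y] K by order
  moreover have "- y \<le> vabs a + vabs b" using vabs_ge(2)[of y] K by order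
  then have "- (vabs a + vabs b) \<le> y" by (simp only: minus_le_iff)
  ultimately show ?thesis by simp
qed



lemma disj_scale2:
  assumes "disj x z" "vabs u \<le> c *\<^sub>R vabs x" "vabs v \<le> d *\<^sub>R vabs z" shows "disj u v"
proof -
  have "disj u z" using disj_scale assms(1,2) by blast
  then have "disj z u" by (simp add: disj_sym)
  then have "disj v u" using disj_scale assms(3) by blast
  then show ?thesis by (simp add: disj_sym)
qed

lemma disj_add4: "disj a c \<Longrightarrow> disj a d \<Longrightarrow> disj b c \<Longrightarrow> disj b d \<Longrightarrow> disj (a + b) (c + d)"
  by (metis disj_add disj_sym)

lemma frag_split_fwd:
  assumes xz: "disj x z" and f1: "fragment y1 x" and f2: "fragment y2 z"
  shows "fragment (y1 + y2) (x + z)" "disj y1 y2" "disj (x - y1) (z - y2)"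
proof -
  have b: "vabs y1 \<le> 1 *\<^sub>R vabs x" "vabs (x - y1) \<le> 1 *\<^sub>R vabs x"
    "vabs y2 \<le> 1 *\<^sub>R vabs z" "vabs (z - y2) \<le> 1 *\<^sub>R vabs z"
    using frag_abs_le f1 f2 frag_abs_le2 by auto
  have d: "disj y1 y2" "disj y1 (z - y2)" "disj (x - y1) y2" "disj (x - y1) (z - y2)"
    using disj_scale2[OF xz] b by blast+
  have "disj y1 (x - y1)" "disj y2 (z - y2)" using f1 f2 by (auto simp: fragment_def)
  then have "disj (y1 + y2) ((x - y1) + (z - y2))"
    using d by (intro disj_add4) (auto simp: disj_sym)
  then show "fragment (y1 + y2) (x + z)" by (simp add: fragment_def algebra_simps)
  show "disj y1 y2" "disj (x - y1) (z - y2)" using d by auto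
qed

lemma frag_split_bwd:
  assumes xz: "disj x z" and f: "fragment y (x + z)"
  shows "\<exists>y1 y2. y = y1 + y2 \<and> fragment y1 x \<and> fragment y2 z"
proof -
  have wabs: "vabs (x + z) = vabs x + vabs z" using disj_abs_add[OF xz] .
  have yle: "vabs y \<le> vabs x + vabs z" using frag_abs_le[OF f] wabs by simp
  have nx: "0 \<le> vabs x" "0 \<le> vabs z" using vabs_nonneg by auto
  define p1 where "p1 = inf (pp y) (vabs x)"
  define q1 where "q1 = pp y - p1"
  define p2 where "p2 = inf (np y) (vabs x)"
  define q2 where "q2 = np y - p2"
  have r1: "0 \<le> q1" "q1 \<le> vabs z" "0 \<le> p1" "p1 \<le> vabs x"
    using riesz_part[of "pp y" "vabs x" "vabs z"] pp_nonneg[of y] pp_le[of y] yle nx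
    unfolding q1_def p1_def by (auto intro: order.trans)
  have r2: "0 \<le> q2" "q2 \<le> vabs z" "0 \<le> p2" "p2 \<le> vabs x"
    using riesz_part[of "np y" "vabs x" "vabs z"] np_nonneg[of y] pp_le[of y] yle nx
    unfolding q2_def p2_def by (auto intro: order.trans)
  define y1 where "y1 = p1 - p2"
  define y2 where "y2 = q1 - q2"
  have y: "y = y1 + y2" unfolding y1_def y2_def q1_def q2_def using pp_np[of y] by (simp add: algebra_simps)
  have two: "vabs x + vabs x = 2 *\<^sub>R vabs x" "vabs z + vabs z = 2 *\<^sub>R vabs z"
    by (simp_all add: scaleR_2)
  have three: "vabs x + 2 *\<^sub>R vabs x = 3 *\<^sub>R vabs x" "vabs z + 2 *\<^sub>R vabs z = 3 *\<^sub>R vabs z"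
    using scaleR_add_left[of 1 2 "vabs x"] scaleR_add_left[of 1 2 "vabs z"] by simp_all
  have b1: "vabs y1 \<le> 2 *\<^sub>R vabs x"
  proof -
    have "vabs y1 \<le> vabs p1 + vabs p2" unfolding y1_def by (rule vabs_diff)
    also have "\<dots> \<le> vabs x + vabs x" using r1 r2 by (simp add: add_mono)
    finally show ?thesis using two by simp
  qed
  have b2: "vabs y2 \<le> 2 *\<^sub>R vabs z"
  proof -
    have "vabs y2 \<le> vabs q1 + vabs q2" unfolding y2_def by (rule vabs_diff)
    also have "\<dots> \<le> vabs z + vabs z" using r1 r2 by (simp add: add_mono)
    finally show ?thesis using two by simp
  qed
  have b3: "vabs (x - y1) \<le> 3 *\<^sub>R vabs x"
  proof -
    have "vabs (x - y1) \<le> vabs x + vabs y1" by (rule vabs_diff)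
    also have "\<dots> \<le> vabs x + 2 *\<^sub>R vabs x" using b1 by (simp add: add_mono)
    finally show ?thesis using three by simp
  qed
  have b4: "vabs (z - y2) \<le> 3 *\<^sub>R vabs z"
  proof -
    have "vabs (z - y2) \<le> vabs z + vabs y2" by (rule vabs_diff)
    also have "\<dots> \<le> vabs z + 2 *\<^sub>R vabs z" using b2 by (simp add: add_mono)
    finally show ?thesis using three by simp
  qed
  have d: "disj y1 y2" "disj (x - y1) (z - y2)" "disj y1 (z - y2)" "disj (x - y1) y2"
    using disj_scale2[OF xz] b1 b2 b3 b4 by blast+
  have ay: "vabs y = vabs y1 + vabs y2" using disj_abs_add[OF d(1)] y by simp
  have aw: "vabs ((x + z) - y) = vabs (x - y1) + vabs (z - y2)"
    using disj_abs_add[OF d(2)] y by (simp add: algebra_simps)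
  have fy: "inf (vabs y) (vabs ((x + z) - y)) = 0" using f by (simp add: fragment_def disj_def)
  have g1: "vabs y1 \<le> vabs y" "vabs y2 \<le> vabs y" using ay vabs_nonneg
    by (simp_all add: add_increasing add_increasing2)
  have g2: "vabs (x - y1) \<le> vabs ((x + z) - y)" "vabs (z - y2) \<le> vabs ((x + z) - y)"
    using aw vabs_nonneg by (simp_all add: add_increasing add_increasing2)
  have "inf (vabs y1) (vabs (x - y1)) = 0"
    using inf_mono[OF g1(1) g2(1)] fy by (intro eq0I inf_vabs_nonneg) simp
  then have "fragment y1 x" by (simp add: fragment_def disj_def)
  moreover have "inf (vabs y2) (vabs (z - y2)) = 0"
    using inf_mono[OF g1(2) g2(2)] fy by (intro eq0I inf_vabs_nonneg) simp
  then have "fragment y2 z" by (simp add: fragment_def disj_def)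
  ultimately show ?thesis using y by blast
qed



lemma Inf_neg:
  fixes X :: "'b::{ordered_real_vector,conditionally_complete_lattice} set"
  assumes "X \<noteq> {}" "bdd_below X"
  shows "Inf X = - Sup (uminus ` X)"
proof (rule order.antisym)
  have bdd: "bdd_above (uminus ` X)" using assms(2) unfolding bdd_below_def bdd_above_def
    by (metis imageE neg_le_iff_le)
  show "Inf X \<le> - Sup (uminus ` X)"
  proof -
    have "Sup (uminus ` X) \<le> - Inf X"
      using assms by (intro cSup_least) (auto simp: cInf_lower)
    then show ?thesis by (simp add: le_minus_iff)
  qed
  show "- Sup (uminus ` X) \<le> Inf X"
    using assms bdd by (intro cInf_greatest) (auto simp: cSup_upper minus_le_iff)
qed

lemma Sup_sum:
  fixes A B :: "'b::{ordered_real_vector,conditionally_complete_lattice} set"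
  assumes "A \<noteq> {}" "B \<noteq> {}" "bdd_above A" "bdd_above B"
  shows "Sup {a + b | a b. a \<in> A \<and> b \<in> B} = Sup A + Sup B"
proof (rule order.antisym)
  let ?C = "{a + b | a b. a \<in> A \<and> b \<in> B}"
  show "Sup ?C \<le> Sup A + Sup B"
    using assms by (intro cSup_least) (auto intro!: add_mono cSup_upper)
  have bC: "bdd_above ?C"
  proof -
    obtain MA where MA: "\<forall>x\<in>A. x \<le> MA" using assms(3) unfolding bdd_above_def by blast
    obtain MB where MB: "\<forall>x\<in>B. x \<le> MB" using assms(4) unfolding bdd_above_def by blast
    have "\<forall>x\<in>?C. x \<le> MA + MB" using MA MB by (auto intro: add_mono)
    then show ?thesis unfolding bdd_above_def by blast
  qed
  have "\<forall>a\<in>A. a \<le> Sup ?C - Sup B"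
  proof
    fix a assume a: "a \<in> A"
    have "\<forall>b\<in>B. b \<le> Sup ?C - a"
    proof
      fix b assume "b \<in> B"
      then have "a + b \<le> Sup ?C" using a bC by (intro cSup_upper) auto
      then show "b \<le> Sup ?C - a" by (simp add: le_diff_eq add.commute)
    qed
    then have "Sup B \<le> Sup ?C - a" using assms by (intro cSup_least) auto
    then show "a \<le> Sup ?C - Sup B" by (simp add: le_diff_eq diff_le_eq add.commute)
  qed
  then have "Sup A \<le> Sup ?C - Sup B" using assms by (intro cSup_least) auto
  then show "Sup A + Sup B \<le> Sup ?C" by (simp add: le_diff_eq)
qed

lemma ury_zero: "T \<in> uryson \<Longrightarrow> T 0 = 0"
proof -
  assume "T \<in> uryson"
  then have "T (0 + 0) = T 0 + T 0" unfolding uryson_def orth_additive_def using disj_zero(1)[of 0] by blast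
  then show "T 0 = 0" by simp
qed

lemma ury_add: "T \<in> uryson \<Longrightarrow> disj x y \<Longrightarrow> T (x + y) = T x + T y"
  unfolding uryson_def orth_additive_def by blast

lemma ury_frag: "T \<in> uryson \<Longrightarrow> fragment y x \<Longrightarrow> T x = T y + T (x - y)"
  using ury_add[of T y "x - y"] by (simp add: fragment_def)

lemma ury_bnd: "T \<in> uryson \<Longrightarrow> \<forall>x\<in>S. a \<le> x \<and> x \<le> b \<Longrightarrow> \<exists>c d. \<forall>x\<in>S. c \<le> T x \<and> T x \<le> d"
  unfolding uryson_def order_bounded_op_def by blast

lemma ury_pos_mono: "T \<in> uryson \<Longrightarrow> op_pos T \<Longrightarrow> fragment y x \<Longrightarrow> T y \<le> T x"
  using ury_frag[of T y x] unfolding op_pos_def by (metis add_increasing2 order_refl)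

lemma frag_set_bnd: "\<exists>k. \<forall>x\<in>S. \<forall>y. fragment y x \<longrightarrow> - k \<le> y \<and> y \<le> k \<and> - k \<le> x - y \<and> x - y \<le> k"
  if "\<forall>x\<in>S. a \<le> x \<and> x \<le> b" for S a b
  using frag_bound[of _ _ a b] frag_compl that by blast

lemma ury_frag_bnd: "S \<in> uryson \<Longrightarrow> \<forall>x\<in>X. a \<le> x \<and> x \<le> b \<Longrightarrow>
   \<exists>c d. \<forall>x\<in>X. \<forall>y. fragment y x \<longrightarrow> c \<le> S y \<and> S y \<le> d \<and> c \<le> S (x - y) \<and> S (x - y) \<le> d"
proof -
  assume S: "S \<in> uryson" and X: "\<forall>x\<in>X. a \<le> x \<and> x \<le> b"
  obtain k where k: "\<forall>x\<in>X. \<forall>y. fragment y x \<longrightarrow> - k \<le> y \<and> y \<le> k \<and> - k \<le> x - y \<and> x - y \<le> k"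
    using frag_set_bnd[OF X] by blast
  obtain c d where cd: "\<forall>z\<in>{z. - k \<le> z \<and> z \<le> k}. c \<le> S z \<and> S z \<le> d"
    using ury_bnd[OF S, of "{z. - k \<le> z \<and> z \<le> k}" "-k" k] by auto
  show ?thesis using k cd by (intro exI[of _ c] exI[of _ d]) auto
qed

lemma ury_uminus: "T \<in> uryson \<Longrightarrow> (\<lambda>x. - T x) \<in> uryson"
  unfolding uryson_def orth_additive_def order_bounded_op_def
  apply auto
  by (metis minus_le_iff neg_le_iff_le)

lemma ury_plus: "S \<in> uryson \<Longrightarrow> T \<in> uryson \<Longrightarrow> (\<lambda>x. S x + T x) \<in> uryson"
proof -
  assume S: "S \<in> uryson" and T: "T \<in> uryson"
  have "orth_additive (\<lambda>x. S x + T x)" using S T unfolding uryson_def orth_additive_def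
    by (auto simp: algebra_simps)
  moreover have "order_bounded_op (\<lambda>x. S x + T x)" unfolding order_bounded_op_def
  proof (intro allI impI)
    fix X :: "'a set" assume "\<exists>a b. \<forall>x\<in>X. a \<le> x \<and> x \<le> b"
    then obtain a b where ab: "\<forall>x\<in>X. a \<le> x \<and> x \<le> b" by blast
    obtain c1 d1 where 1: "\<forall>x\<in>X. c1 \<le> S x \<and> S x \<le> d1" using ury_bnd[OF S ab] by blast
    obtain c2 d2 where 2: "\<forall>x\<in>X. c2 \<le> T x \<and> T x \<le> d2" using ury_bnd[OF T ab] by blast
    show "\<exists>c d. \<forall>x\<in>X. c \<le> S x + T x \<and> S x + T x \<le> d"
      using 1 2 by (intro exI[of _ "c1+c2"] exI[of _ "d1+d2"]) (auto intro: add_mono)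
  qed
  ultimately show ?thesis by (simp add: uryson_def)
qed

lemma ury_minus: "S \<in> uryson \<Longrightarrow> T \<in> uryson \<Longrightarrow> (\<lambda>x. S x - T x) \<in> uryson"
proof -
  assume "S \<in> uryson" "T \<in> uryson"
  then have "(\<lambda>x. S x + - T x) \<in> uryson" using ury_plus[OF _ ury_uminus] by blast
  then show ?thesis by (simp only: diff_conv_add_uminus)
qed

lemma ury_zero_op: "(\<lambda>x. 0) \<in> uryson"
  unfolding uryson_def orth_additive_def order_bounded_op_def by auto

lemma ury_scale: "T \<in> uryson \<Longrightarrow> (\<lambda>x. c *\<^sub>R T x) \<in> uryson"
proof -
  assume T: "T \<in> uryson"
  have "orth_additive (\<lambda>x. c *\<^sub>R T x)" using T unfolding uryson_def orth_additive_def
    by (auto simp: scaleR_add_right)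
  moreover have "order_bounded_op (\<lambda>x. c *\<^sub>R T x)" unfolding order_bounded_op_def
  proof (intro allI impI)
    fix X :: "'a set" assume "\<exists>a b. \<forall>x\<in>X. a \<le> x \<and> x \<le> b"
    then obtain a b where ab: "\<forall>x\<in>X. a \<le> x \<and> x \<le> b" by blast
    obtain c1 d1 where 1: "\<forall>x\<in>X. c1 \<le> T x \<and> T x \<le> d1" using ury_bnd[OF T ab] by blast
    show "\<exists>e f. \<forall>x\<in>X. e \<le> c *\<^sub>R T x \<and> c *\<^sub>R T x \<le> f"
    proof (cases "0 \<le> c")
      case True
      then show ?thesis using 1 by (intro exI[of _ "c *\<^sub>R c1"] exI[of _ "c *\<^sub>R d1"]) (auto intro: scaleR_left_mono)
    next
      case False
      then have "\<forall>x\<in>X. c *\<^sub>R d1 \<le> c *\<^sub>R T x \<and> c *\<^sub>R T x \<le> c *\<^sub>R c1"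
        using 1 by (auto intro: scaleR_left_mono_neg)
      then show ?thesis by blast
    qed
  qed
  ultimately show ?thesis by (simp add: uryson_def)
qed



definition supf :: "('a::{ordered_real_vector,lattice} \<Rightarrow> 'b::{ordered_real_vector,conditionally_complete_lattice}) \<Rightarrow> ('a \<Rightarrow> 'b) \<Rightarrow> 'a \<Rightarrow> 'b" where
  "supf S T x = Sup {S y + T (x - y) | y. fragment y x}"

lemma supf_set_bnd:
  assumes S: "S \<in> uryson" and T: "T \<in> uryson" and X: "\<forall>x\<in>X. a \<le> x \<and> x \<le> b"
  shows "\<exists>d. \<forall>x\<in>X. \<forall>y. fragment y x \<longrightarrow> S y + T (x - y) \<le> d"
proof -
  obtain c1 d1 where 1: "\<forall>x\<in>X. \<forall>y. fragment y x \<longrightarrow> c1 \<le> S y \<and> S y \<le> d1 \<and> c1 \<le> S (x - y) \<and> S (x - y) \<le> d1"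
    using ury_frag_bnd[OF S X] by blast
  obtain c2 d2 where 2: "\<forall>x\<in>X. \<forall>y. fragment y x \<longrightarrow> c2 \<le> T y \<and> T y \<le> d2 \<and> c2 \<le> T (x - y) \<and> T (x - y) \<le> d2"
    using ury_frag_bnd[OF T X] by blast
  show ?thesis using 1 2 by (intro exI[of _ "d1 + d2"]) (auto intro: add_mono)
qed

lemma supf_bdd: "S \<in> uryson \<Longrightarrow> T \<in> uryson \<Longrightarrow> bdd_above {S y + T (x - y) | y. fragment y x}"
  using supf_set_bnd[of S T "{x}" x x] unfolding bdd_above_def by auto

lemma supf_ne: "{S y + T (x - y) | y. fragment y x} \<noteq> {}"
  using frag_refl by blast

lemma supf_upper: "S \<in> uryson \<Longrightarrow> T \<in> uryson \<Longrightarrow> fragment y x \<Longrightarrow> S y + T (x - y) \<le> supf S T x"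
  unfolding supf_def by (rule cSup_upper) (auto intro: supf_bdd)

lemma supf_least: "(\<And>y. fragment y x \<Longrightarrow> S y + T (x - y) \<le> c) \<Longrightarrow> supf S T x \<le> c"
  unfolding supf_def by (rule cSup_least[OF supf_ne]) auto

lemma supf_split_set:
  assumes S: "S \<in> uryson" and T: "T \<in> uryson" and xz: "disj x z"
  shows "{S y + T ((x + z) - y) | y. fragment y (x + z)}
       = {a + b | a b. a \<in> {S y + T (x - y) | y. fragment y x} \<and> b \<in> {S y + T (z - y) | y. fragment y z}}"
proof (intro set_eqI iffI)
  fix v assume "v \<in> {S y + T ((x + z) - y) | y. fragment y (x + z)}"
  then obtain y where v: "v = S y + T ((x + z) - y)" and f: "fragment y (x + z)" by blast
  obtain y1 y2 where y: "y = y1 + y2" and f1: "fragment y1 x" and f2: "fragment y2 z"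
    using frag_split_bwd[OF xz f] by blast
  have d: "disj y1 y2" "disj (x - y1) (z - y2)" using frag_split_fwd[OF xz f1 f2] by auto
  have "S y = S y1 + S y2" using ury_add[OF S d(1)] y by simp
  moreover have "T ((x + z) - y) = T (x - y1) + T (z - y2)"
    using ury_add[OF T d(2)] y by (simp add: algebra_simps)
  ultimately have "v = (S y1 + T (x - y1)) + (S y2 + T (z - y2))" using v by (simp add: algebra_simps)
  then show "v \<in> {a + b | a b. a \<in> {S y + T (x - y) | y. fragment y x} \<and> b \<in> {S y + T (z - y) | y. fragment y z}}"
    using f1 f2 by blast
next
  fix v assume "v \<in> {a + b | a b. a \<in> {S y + T (x - y) | y. fragment y x} \<and> b \<in> {S y + T (z - y) | y. fragment y z}}"
  then obtain y1 y2 where v: "v = (S y1 + T (x - y1)) + (S y2 + T (z - y2))"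
    and f1: "fragment y1 x" and f2: "fragment y2 z" by blast
  have d: "fragment (y1 + y2) (x + z)" "disj y1 y2" "disj (x - y1) (z - y2)"
    using frag_split_fwd[OF xz f1 f2] by auto
  have "S (y1 + y2) = S y1 + S y2" using ury_add[OF S d(2)] by simp
  moreover have "T ((x + z) - (y1 + y2)) = T (x - y1) + T (z - y2)"
    using ury_add[OF T d(3)] by (simp add: algebra_simps)
  ultimately have "v = S (y1 + y2) + T ((x + z) - (y1 + y2))" using v by (simp add: algebra_simps)
  then show "v \<in> {S y + T ((x + z) - y) | y. fragment y (x + z)}" using d(1) by blast
qed

lemma supf_ury: assumes S: "S \<in> uryson" and T: "T \<in> uryson" shows "supf S T \<in> uryson"
proof -
  have "orth_additive (supf S T)" unfolding orth_additive_def
  proof (intro allI impI)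
    fix x z :: 'a assume xz: "disj x z"
    show "supf S T (x + z) = supf S T x + supf S T z"
      unfolding supf_def supf_split_set[OF S T xz]
      by (rule Sup_sum[OF supf_ne supf_ne supf_bdd[OF S T] supf_bdd[OF S T]])
  qed
  moreover have "order_bounded_op (supf S T)" unfolding order_bounded_op_def
  proof (intro allI impI)
    fix X :: "'a set" assume "\<exists>a b. \<forall>x\<in>X. a \<le> x \<and> x \<le> b"
    then obtain a b where ab: "\<forall>x\<in>X. a \<le> x \<and> x \<le> b" by blast
    obtain d where d: "\<forall>x\<in>X. \<forall>y. fragment y x \<longrightarrow> S y + T (x - y) \<le> d"
      using supf_set_bnd[OF S T ab] by blast
    obtain c1 d1 where 1: "\<forall>x\<in>X. c1 \<le> S x \<and> S x \<le> d1" using ury_bnd[OF S ab] by blast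
    have "\<forall>x\<in>X. c1 \<le> supf S T x \<and> supf S T x \<le> d"
    proof
      fix x assume x: "x \<in> X"
      have "S x + T (x - x) \<le> supf S T x" by (rule supf_upper[OF S T]) simp
      then have "S x \<le> supf S T x" using ury_zero[OF T] by simp
      then show "c1 \<le> supf S T x \<and> supf S T x \<le> d" using 1 x d
        by (auto intro: order.trans supf_least)
    qed
    then show "\<exists>c d. \<forall>x\<in>X. c \<le> supf S T x \<and> supf S T x \<le> d" by blast
  qed
  ultimately show ?thesis by (simp add: uryson_def)
qed

lemma supf_lub: assumes S: "S \<in> uryson" and T: "T \<in> uryson" shows "is_lub_U {S, T} (supf S T)"
  unfolding is_lub_U_def op_le_def op_pos_def
proof (intro conjI ballI allI impI)
  show "supf S T \<in> uryson" using supf_ury[OF S T] .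
  fix x
  {
    fix R assume R: "R \<in> uryson" "\<forall>S'\<in>{S, T}. \<forall>x. 0 \<le> R x - S' x"
    show "0 \<le> R x - supf S T x"
    proof -
      have "supf S T x \<le> R x"
      proof (rule supf_least)
        fix y assume f: "fragment y x"
        have "S y \<le> R y" "T (x - y) \<le> R (x - y)" using R(2) by auto
        then show "S y + T (x - y) \<le> R x" using ury_frag[OF R(1) f] by (simp add: add_mono)
      qed
      then show ?thesis by simp
    qed
  }
  fix S' assume "S' \<in> {S, T}"
  moreover have "S x \<le> supf S T x" using supf_upper[OF S T frag_refl[of x]] ury_zero[OF T] by simp
  moreover have "T x \<le> supf S T x" using supf_upper[OF S T frag_zero[of x]] ury_zero[OF S] by simp
  ultimately show "0 \<le> supf S T x - S' x" by auto
qed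

lemma lub_unique: "is_lub_U A R \<Longrightarrow> is_lub_U A R' \<Longrightarrow> R = R'"
  unfolding is_lub_U_def op_le_def op_pos_def
  by (metis (no_types) antisym_conv diff_ge_0_iff_ge ext)

lemma glb_unique: "is_glb_U A R \<Longrightarrow> is_glb_U A R' \<Longrightarrow> R = R'"
  unfolding is_glb_U_def op_le_def op_pos_def
  by (metis (no_types) antisym_conv diff_ge_0_iff_ge ext)

lemma usup_eq: "is_lub_U {S, T} R \<Longrightarrow> usup S T = R"
  unfolding usup_def using lub_unique by blast

lemma uinf_eq: "is_glb_U {S, T} R \<Longrightarrow> uinf S T = R"
  unfolding uinf_def using glb_unique by blast

lemma usup_supf: "S \<in> uryson \<Longrightarrow> T \<in> uryson \<Longrightarrow> usup S T = supf S T"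
  using usup_eq supf_lub by blast



definition inff :: "('a::{ordered_real_vector,lattice} \<Rightarrow> 'b::{ordered_real_vector,conditionally_complete_lattice}) \<Rightarrow> ('a \<Rightarrow> 'b) \<Rightarrow> 'a \<Rightarrow> 'b" where
  "inff S T x = Inf {S y + T (x - y) | y. fragment y x}"

lemma inff_bdd: assumes S: "S \<in> uryson" and T: "T \<in> uryson"
  shows "bdd_below {S y + T (x - y) | y. fragment y x}"
proof -
  have "bdd_above {(- S y) + (- T (x - y)) | y. fragment y x}"
    using supf_bdd[OF ury_uminus[OF S] ury_uminus[OF T], of x] by simp
  then obtain d where d: "\<forall>y. fragment y x \<longrightarrow> (- S y) + (- T (x - y)) \<le> d"
    unfolding bdd_above_def by blast
  have "\<forall>y. fragment y x \<longrightarrow> - d \<le> S y + T (x - y)"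
  proof (intro allI impI)
    fix y assume "fragment y x"
    with d have "- (S y + T (x - y)) \<le> d" by simp
    then show "- d \<le> S y + T (x - y)" by (simp only: minus_le_iff)
  qed
  then show ?thesis unfolding bdd_below_def by blast
qed

lemma inff_lower: "S \<in> uryson \<Longrightarrow> T \<in> uryson \<Longrightarrow> fragment y x \<Longrightarrow> inff S T x \<le> S y + T (x - y)"
  unfolding inff_def by (rule cInf_lower) (auto intro: inff_bdd)

lemma inff_greatest: "(\<And>y. fragment y x \<Longrightarrow> c \<le> S y + T (x - y)) \<Longrightarrow> c \<le> inff S T x"
  unfolding inff_def by (rule cInf_greatest[OF supf_ne]) auto

lemma zero_le_add_iff: "0 \<le> a + b \<longleftrightarrow> - a \<le> (b::'b::ordered_ab_group_add)"
  using add_le_cancel_left[of "-a" 0 "a+b"] by simp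

lemma inff_neg: assumes S: "S \<in> uryson" and T: "T \<in> uryson"
  shows "inff S T = (\<lambda>x. - supf (\<lambda>x. - S x) (\<lambda>x. - T x) x)"
proof
  fix x
  have "uminus ` {S y + T (x - y) | y. fragment y x} = {(- S y) + (- T (x - y)) | y. fragment y x}"
  proof (intro set_eqI iffI)
    fix v assume "v \<in> uminus ` {S y + T (x - y) | y. fragment y x}"
    then obtain y where "fragment y x" "v = - (S y + T (x - y))" by blast
    then show "v \<in> {(- S y) + (- T (x - y)) | y. fragment y x}" by (auto intro!: exI[of _ y])
  next
    fix v assume "v \<in> {(- S y) + (- T (x - y)) | y. fragment y x}"
    then obtain y where y: "fragment y x" "v = (- S y) + (- T (x - y))" by blast
    then have "v = - (S y + T (x - y))" by simp
    then show "v \<in> uminus ` {S y + T (x - y) | y. fragment y x}" using y(1) by blast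
  qed
  then show "inff S T x = - supf (\<lambda>x. - S x) (\<lambda>x. - T x) x"
    unfolding inff_def supf_def using Inf_neg[OF supf_ne inff_bdd[OF S T]] by simp
qed

lemma inff_glb: assumes S: "S \<in> uryson" and T: "T \<in> uryson" shows "is_glb_U {S, T} (inff S T)"
proof -
  let ?M = "supf (\<lambda>x. - S x) (\<lambda>x. - T x)"
  have L: "is_lub_U {(\<lambda>x. - S x), (\<lambda>x. - T x)} ?M"
    by (rule supf_lub[OF ury_uminus[OF S] ury_uminus[OF T]])
  have M: "?M \<in> uryson" "\<And>x. - S x \<le> ?M x" "\<And>x. - T x \<le> ?M x"
    using L unfolding is_lub_U_def op_le_def op_pos_def by auto
  have Mleast: "\<And>R x. R \<in> uryson \<Longrightarrow> (\<And>x. - S x \<le> R x) \<Longrightarrow> (\<And>x. - T x \<le> R x) \<Longrightarrow> ?M x \<le> R x"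
    using L unfolding is_lub_U_def op_le_def op_pos_def by auto
  show ?thesis unfolding inff_neg[OF S T] is_glb_U_def
  proof (intro conjI ballI impI)
    show "(\<lambda>x. - ?M x) \<in> uryson" using M(1) ury_uminus by blast
    fix S' assume "S' \<in> {S, T}"
    then show "op_le (\<lambda>x. - ?M x) S'"
      unfolding op_le_def op_pos_def using M(2,3) by (auto simp: zero_le_add_iff)
  next
    fix R assume R: "R \<in> uryson" "\<forall>S'\<in>{S, T}. op_le R S'"
    have "\<And>x. R x \<le> S x" "\<And>x. R x \<le> T x" using R(2) unfolding op_le_def op_pos_def by auto
    then have "\<And>x. ?M x \<le> - R x" using Mleast[OF ury_uminus[OF R(1)]] by simp
    then show "op_le R (\<lambda>x. - ?M x)"
      unfolding op_le_def op_pos_def by (simp add: le_minus_iff)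
  qed
qed

lemma uinf_inff: "S \<in> uryson \<Longrightarrow> T \<in> uryson \<Longrightarrow> uinf S T = inff S T"
  using uinf_eq inff_glb by blast

lemma uinf_commute: "uinf S T = uinf T S"
  unfolding uinf_def by (simp add: insert_commute)

lemma uinf_le: "S \<in> uryson \<Longrightarrow> op_le S T \<Longrightarrow> uinf S T = S"
  by (rule uinf_eq) (auto simp: is_glb_U_def op_le_def op_pos_def)

lemma usup_ge: "T \<in> uryson \<Longrightarrow> op_le S T \<Longrightarrow> usup S T = T"
  by (rule usup_eq) (auto simp: is_lub_U_def op_le_def op_pos_def)

lemma usup_ge2: "S \<in> uryson \<Longrightarrow> op_le T S \<Longrightarrow> usup S T = S"
  by (rule usup_eq) (auto simp: is_lub_U_def op_le_def op_pos_def)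

lemma uabs_supf: "T \<in> uryson \<Longrightarrow> uabs T = supf T (\<lambda>x. - T x)"
  unfolding uabs_def using usup_supf ury_uminus by blast

lemma uabs_lub: "(T::'a::{ordered_real_vector,lattice} \<Rightarrow> 'b::{ordered_real_vector,conditionally_complete_lattice}) \<in> uryson \<Longrightarrow> is_lub_U {T, (\<lambda>x. - T x)} (uabs T)"
proof -
  assume T: "T \<in> uryson"
  show ?thesis unfolding uabs_supf[OF T] by (rule supf_lub[OF T ury_uminus[OF T]])
qed

lemma uabs_ury: "(T::'a::{ordered_real_vector,lattice} \<Rightarrow> 'b::{ordered_real_vector,conditionally_complete_lattice}) \<in> uryson \<Longrightarrow> uabs T \<in> uryson"
  using uabs_lub is_lub_U_def by blast

lemma uabs_ge: "(T::'a::{ordered_real_vector,lattice} \<Rightarrow> 'b::{ordered_real_vector,conditionally_complete_lattice}) \<in> uryson \<Longrightarrow> T x \<le> uabs T x \<and> - T x \<le> uabs T x"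
  using uabs_lub[of T] unfolding is_lub_U_def op_le_def op_pos_def by auto

lemma uabs_nonneg: "(T::'a::{ordered_real_vector,lattice} \<Rightarrow> 'b::{ordered_real_vector,conditionally_complete_lattice}) \<in> uryson \<Longrightarrow> 0 \<le> uabs T x"
proof -
  assume T: "T \<in> uryson"
  have "T x + - T x \<le> uabs T x + uabs T x" using uabs_ge[OF T, of x] by (intro add_mono) auto
  then have "0 \<le> uabs T x + uabs T x" by simp
  then show ?thesis by (rule half_nonneg)
qed

lemma uabs_least: "(T::'a::{ordered_real_vector,lattice} \<Rightarrow> 'b::{ordered_real_vector,conditionally_complete_lattice}) \<in> uryson \<Longrightarrow> R \<in> uryson \<Longrightarrow> (\<And>x. T x \<le> R x) \<Longrightarrow> (\<And>x. - T x \<le> R x) \<Longrightarrow> uabs T x \<le> R x"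
  using uabs_lub[of T] unfolding is_lub_U_def op_le_def op_pos_def by auto

lemma uabs_pos: "(T::'a::{ordered_real_vector,lattice} \<Rightarrow> 'b::{ordered_real_vector,conditionally_complete_lattice}) \<in> uryson \<Longrightarrow> (\<And>x. 0 \<le> T x) \<Longrightarrow> uabs T = T"
  unfolding uabs_def
  by (rule usup_ge2) (auto simp: op_le_def op_pos_def intro: add_nonneg_nonneg)

lemma uabs_eq0: assumes T: "(T::'a::{ordered_real_vector,lattice} \<Rightarrow> 'b::{ordered_real_vector,conditionally_complete_lattice}) \<in> uryson" and z: "uabs T = (\<lambda>x. 0)" shows "T = (\<lambda>x. 0)"
proof
  fix x
  have "T x \<le> 0" "- T x \<le> 0" using uabs_ge[OF T, of x] z by auto
  then show "T x = 0" by (intro order.antisym) (simp_all add: neg_le_0_iff_le)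
qed

lemma uabs_triangle: "S \<in> uryson \<Longrightarrow> (T::'a::{ordered_real_vector,lattice} \<Rightarrow> 'b::{ordered_real_vector,conditionally_complete_lattice}) \<in> uryson \<Longrightarrow> uabs (\<lambda>x. S x + T x) x \<le> uabs S x + uabs T x"
proof (rule uabs_least)
  assume S: "S \<in> uryson" and T: "T \<in> uryson"
  show "(\<lambda>x. S x + T x) \<in> uryson" using ury_plus[OF S T] .
  show "(\<lambda>x. uabs S x + uabs T x) \<in> uryson" using ury_plus[OF uabs_ury[OF S] uabs_ury[OF T]] .
  fix x
  show "S x + T x \<le> uabs S x + uabs T x" using uabs_ge[OF S, of x] uabs_ge[OF T, of x] by (intro add_mono) auto
  have "- S x + - T x \<le> uabs S x + uabs T x" using uabs_ge[OF S, of x] uabs_ge[OF T, of x] by (intro add_mono) auto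
  then show "- (S x + T x) \<le> uabs S x + uabs T x" by simp
qed

lemma uabs_scale: "(T::'a::{ordered_real_vector,lattice} \<Rightarrow> 'b::{ordered_real_vector,conditionally_complete_lattice}) \<in> uryson \<Longrightarrow> uabs (\<lambda>x. c *\<^sub>R T x) x \<le> \<bar>c\<bar> *\<^sub>R uabs T x"
proof (rule uabs_least)
  assume T: "T \<in> uryson"
  show "(\<lambda>x. c *\<^sub>R T x) \<in> uryson" using ury_scale[OF T] .
  show "(\<lambda>x. \<bar>c\<bar> *\<^sub>R uabs T x) \<in> uryson" using ury_scale[OF uabs_ury[OF T]] .
  fix x
  have g: "T x \<le> uabs T x" "- T x \<le> uabs T x" using uabs_ge[OF T] by auto
  show "c *\<^sub>R T x \<le> \<bar>c\<bar> *\<^sub>R uabs T x"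
  proof (cases "0 \<le> c")
    case True then show ?thesis using g by (simp add: scaleR_left_mono)
  next
    case False
    then have "(- c) *\<^sub>R (- T x) \<le> (- c) *\<^sub>R uabs T x" using g by (intro scaleR_left_mono) auto
    then show ?thesis using False by simp
  qed
  show "- (c *\<^sub>R T x) \<le> \<bar>c\<bar> *\<^sub>R uabs T x"
  proof (cases "0 \<le> c")
    case True
    then have "c *\<^sub>R (- T x) \<le> c *\<^sub>R uabs T x" using g by (intro scaleR_left_mono) auto
    then show ?thesis using True by simp
  next
    case False
    then have "(- c) *\<^sub>R (T x) \<le> (- c) *\<^sub>R uabs T x" using g by (intro scaleR_left_mono) auto
    then show ?thesis using False by simp
  qed
qed

lemma uabs_zero: "uabs (\<lambda>x::'a::{ordered_real_vector,lattice}. 0::'b::{ordered_real_vector,conditionally_complete_lattice}) = (\<lambda>x. 0)"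
  using uabs_pos[OF ury_zero_op] by simp

lemma upos_pos: "(T::'a::{ordered_real_vector,lattice} \<Rightarrow> 'b::{ordered_real_vector,conditionally_complete_lattice}) \<in> uryson \<Longrightarrow> (\<And>x. 0 \<le> T x) \<Longrightarrow> upos T = T"
  unfolding upos_def by (rule usup_ge2) (auto simp: op_le_def op_pos_def)

lemma uneg_pos: "(T::'a::{ordered_real_vector,lattice} \<Rightarrow> 'b::{ordered_real_vector,conditionally_complete_lattice}) \<in> uryson \<Longrightarrow> (\<And>x. 0 \<le> T x) \<Longrightarrow> uneg T = (\<lambda>x. 0)"
  unfolding uneg_def by (rule usup_ge) (auto simp: op_le_def op_pos_def ury_zero_op)



lemma upos_lub: "(T::'a::{ordered_real_vector,lattice} \<Rightarrow> 'b::{ordered_real_vector,conditionally_complete_lattice}) \<in> uryson \<Longrightarrow> is_lub_U {T, (\<lambda>x. 0)} (upos T)"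
proof -
  assume T: "T \<in> uryson"
  show ?thesis unfolding upos_def usup_supf[OF T ury_zero_op] by (rule supf_lub[OF T ury_zero_op])
qed

lemma upos_ury: "(T::'a::{ordered_real_vector,lattice} \<Rightarrow> 'b::{ordered_real_vector,conditionally_complete_lattice}) \<in> uryson \<Longrightarrow> upos T \<in> uryson"
  using upos_lub is_lub_U_def by blast

lemma upos_ge: "(T::'a::{ordered_real_vector,lattice} \<Rightarrow> 'b::{ordered_real_vector,conditionally_complete_lattice}) \<in> uryson \<Longrightarrow> T x \<le> upos T x \<and> 0 \<le> upos T x"
  using upos_lub[of T] unfolding is_lub_U_def op_le_def op_pos_def by auto

lemma uneg_eq: assumes T: "(T::'a::{ordered_real_vector,lattice} \<Rightarrow> 'b::{ordered_real_vector,conditionally_complete_lattice}) \<in> uryson" shows "uneg T = (\<lambda>x. upos T x - T x)"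
  unfolding uneg_def
proof (rule usup_eq)
  have L: "is_lub_U {T, (\<lambda>x. 0)} (upos T)" using upos_lub[OF T] .
  show "is_lub_U {\<lambda>x. - T x, \<lambda>x. 0} (\<lambda>x. upos T x - T x)"
    unfolding is_lub_U_def
  proof (intro conjI ballI impI)
    show "(\<lambda>x. upos T x - T x) \<in> uryson" using ury_minus[OF upos_ury[OF T] T] .
    fix S assume "S \<in> {\<lambda>x. - T x, \<lambda>x. 0}"
    then show "op_le S (\<lambda>x. upos T x - T x)"
      using upos_ge[OF T] unfolding op_le_def op_pos_def by auto
  next
    fix R assume R: "R \<in> uryson" "\<forall>S\<in>{\<lambda>x. - T x, \<lambda>x. 0}. op_le S R"
    have R1: "\<And>x. - T x \<le> R x" "\<And>x. 0 \<le> R x" using R(2) unfolding op_le_def op_pos_def by auto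
    have "\<And>x. T x \<le> R x + T x" using R1(2) by (simp add: add_increasing)
    moreover have "\<And>x. 0 \<le> R x + T x"
    proof -
      fix x have "0 \<le> T x + R x" using R1(1)[of x] by (simp add: zero_le_add_iff)
      then show "0 \<le> R x + T x" by (simp only: add.commute)
    qed
    ultimately have "\<And>x. upos T x \<le> R x + T x"
      using L ury_plus[OF R(1) T] unfolding is_lub_U_def op_le_def op_pos_def by auto
    then have "op_le (upos T) (\<lambda>x. R x + T x)" unfolding op_le_def op_pos_def by simp
    then show "op_le (\<lambda>x. upos T x - T x) R" unfolding op_le_def op_pos_def
      by (auto simp: algebra_simps)
  qed
qed

lemma uneg_ury: "(T::'a::{ordered_real_vector,lattice} \<Rightarrow> 'b::{ordered_real_vector,conditionally_complete_lattice}) \<in> uryson \<Longrightarrow> uneg T \<in> uryson"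
  unfolding uneg_eq by (intro ury_minus upos_ury)

lemma uneg_nonneg: "(T::'a::{ordered_real_vector,lattice} \<Rightarrow> 'b::{ordered_real_vector,conditionally_complete_lattice}) \<in> uryson \<Longrightarrow> 0 \<le> uneg T x"
  unfolding uneg_eq using upos_ge[of T x] by simp

lemma upos_uneg: "(T::'a::{ordered_real_vector,lattice} \<Rightarrow> 'b::{ordered_real_vector,conditionally_complete_lattice}) \<in> uryson \<Longrightarrow> T x = upos T x - uneg T x"
  unfolding uneg_eq by simp

definition perp0 :: "('a::{ordered_real_vector,lattice} \<Rightarrow> 'b::{ordered_real_vector,conditionally_complete_lattice}) \<Rightarrow> ('a \<Rightarrow> 'b) \<Rightarrow> bool" where
  "perp0 A C \<longleftrightarrow> (\<forall>x. inff A C x = 0)"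

definition upos_op :: "('a::{ordered_real_vector,lattice} \<Rightarrow> 'b::{ordered_real_vector,conditionally_complete_lattice}) \<Rightarrow> bool" where
  "upos_op A \<longleftrightarrow> A \<in> uryson \<and> (\<forall>x. 0 \<le> A x)"

lemma inff_nonneg: "upos_op A \<Longrightarrow> upos_op C \<Longrightarrow> 0 \<le> inff A C x"
  unfolding upos_op_def by (intro inff_greatest) (simp add: add_nonneg_nonneg)

lemma perp0_I: "upos_op A \<Longrightarrow> upos_op C \<Longrightarrow> (\<And>x. inff A C x \<le> 0) \<Longrightarrow> perp0 A C"
  unfolding perp0_def using inff_nonneg by (blast intro: eq0I)

lemma udisj_perp0: "S \<in> uryson \<Longrightarrow> T \<in> uryson \<Longrightarrow> udisj S T \<longleftrightarrow> perp0 (uabs S) (uabs T)"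
  unfolding udisj_def perp0_def by (simp add: uinf_inff uabs_ury fun_eq_iff)

lemma upos_op_uabs: "T \<in> uryson \<Longrightarrow> upos_op (uabs T)"
  unfolding upos_op_def using uabs_ury uabs_nonneg by blast

lemma perp0_sym: assumes A: "upos_op A" and C: "upos_op C" and p: "perp0 A C" shows "perp0 C A"
proof (rule perp0_I[OF C A])
  fix x
  have "inff C A x \<le> inff A C x"
  proof (rule inff_greatest)
    fix y assume f: "fragment y x"
    have "inff C A x \<le> C (x - y) + A (x - (x - y))"
      using A C frag_compl[OF f] unfolding upos_op_def by (intro inff_lower) auto
    then show "inff C A x \<le> A y + C (x - y)" by (simp add: add.commute)
  qed
  then show "inff C A x \<le> 0" using p unfolding perp0_def by simp
qed

lemma perp0_mono: assumes A: "upos_op A" and C: "upos_op C" and C': "upos_op C'"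
  and le: "\<And>x. C' x \<le> C x" and p: "perp0 A C" shows "perp0 A C'"
proof (rule perp0_I[OF A C'])
  fix x
  have "inff A C' x \<le> inff A C x"
  proof (rule inff_greatest)
    fix y assume f: "fragment y x"
    have "inff A C' x \<le> A y + C' (x - y)" using A C' f unfolding upos_op_def by (intro inff_lower) auto
    also have "\<dots> \<le> A y + C (x - y)" using le by (simp add: add_left_mono)
    finally show "inff A C' x \<le> A y + C (x - y)" .
  qed
  then show "inff A C' x \<le> 0" using p unfolding perp0_def by simp
qed

lemma perp0_zero: assumes A: "upos_op A" shows "perp0 A (\<lambda>x. 0)"
proof (rule perp0_I[OF A])
  show "upos_op (\<lambda>x. 0)" by (simp add: upos_op_def ury_zero_op)
  fix x
  have "inff A (\<lambda>x. 0) x \<le> A 0 + 0" using A ury_zero_op unfolding upos_op_def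
    by (intro inff_lower) auto
  moreover have "A 0 = 0" using A ury_zero unfolding upos_op_def by blast
  ultimately show "inff A (\<lambda>x. 0) x \<le> 0" by simp
qed

lemma upos_op_plus: "upos_op A \<Longrightarrow> upos_op C \<Longrightarrow> upos_op (\<lambda>x. A x + C x)"
  unfolding upos_op_def by (auto intro: ury_plus add_nonneg_nonneg)

lemma perp0_add_left: assumes A: "upos_op A" and C: "upos_op C" and C': "upos_op C'"
  and p1: "perp0 C A" and p2: "perp0 C' A" shows "perp0 (\<lambda>x. C x + C' x) A"
proof (rule perp0_I[OF upos_op_plus[OF C C'] A])
  fix x
  let ?t = "inff (\<lambda>x. C x + C' x) A x"
  have Au: "A \<in> uryson" and Cu: "C \<in> uryson" and C'u: "C' \<in> uryson"
    and C'p: "\<And>x. 0 \<le> C' x" using A C C' unfolding upos_op_def by auto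
  have "?t \<le> inff C' A x"
  proof (rule inff_greatest)
    fix y assume yx: "fragment y x"
    have "?t - (C' y + A (x - y)) \<le> inff C A y"
    proof (rule inff_greatest)
      fix w assume wy: "fragment w y"
      have wx: "fragment w x" and dd: "disj (x - y) (y - w)" using frag_trans[OF wy yx] by auto
      have "?t \<le> (C w + C' w) + A (x - w)"
        using wx ury_plus[OF Cu C'u] Au by (intro inff_lower) auto
      also have "A (x - w) = A (x - y) + A (y - w)" using ury_add[OF Au dd] by (simp add: algebra_simps)
      also have "C' w \<le> C' y" using ury_pos_mono[OF C'u _ wy] C'p by (simp add: op_pos_def)
      then have "(C w + C' w) + (A (x - y) + A (y - w)) \<le> (C w + A (y - w)) + (C' y + A (x - y))"
        by (simp add: algebra_simps add_right_mono)
      finally show "?t - (C' y + A (x - y)) \<le> C w + A (y - w)" by (simp add: diff_le_eq)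
    qed
    then show "?t \<le> C' y + A (x - y)" using p1 unfolding perp0_def by (simp add: diff_le_eq)
  qed
  then show "?t \<le> 0" using p2 unfolding perp0_def by simp
qed

lemma perp0_add: assumes A: "upos_op A" and C: "upos_op C" and C': "upos_op C'"
  and p1: "perp0 A C" and p2: "perp0 A C'" shows "perp0 A (\<lambda>x. C x + C' x)"
  using perp0_sym[OF upos_op_plus[OF C C'] A perp0_add_left[OF A C C' perp0_sym[OF A C p1] perp0_sym[OF A C' p2]]] .

lemma upos_op_scale: "upos_op C \<Longrightarrow> 0 \<le> k \<Longrightarrow> upos_op (\<lambda>x. k *\<^sub>R C x)"
  unfolding upos_op_def by (auto intro: ury_scale scaleR_nonneg_nonneg)

lemma perp0_scale: assumes A: "upos_op A" and C: "upos_op C" and k: "0 \<le> k"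
  and p: "perp0 A C" shows "perp0 A (\<lambda>x. k *\<^sub>R C x)"
proof (cases "k \<le> 1")
  case True
  show ?thesis
  proof (rule perp0_mono[OF A C upos_op_scale[OF C k] _ p])
    fix x show "k *\<^sub>R C x \<le> C x"
      using scaleR_right_mono[OF True, of "C x"] C unfolding upos_op_def by auto
  qed
next
  case False
  then have k1: "1 < k" by simp
  show ?thesis
  proof (rule perp0_I[OF A upos_op_scale[OF C k]])
    fix x
    let ?t = "inff A (\<lambda>x. k *\<^sub>R C x) x"
    have "(1/k) *\<^sub>R ?t \<le> inff A C x"
    proof (rule inff_greatest)
      fix y assume f: "fragment y x"
      have "?t \<le> A y + k *\<^sub>R C (x - y)"
        using A upos_op_scale[OF C k] f unfolding upos_op_def by (intro inff_lower) auto
      also have "A y \<le> k *\<^sub>R A y" using scaleR_right_mono[of 1 k "A y"] k1 A unfolding upos_op_def by auto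
      then have "A y + k *\<^sub>R C (x - y) \<le> k *\<^sub>R (A y + C (x - y))"
        by (simp add: scaleR_add_right add_right_mono)
      finally have "(1/k) *\<^sub>R ?t \<le> (1/k) *\<^sub>R (k *\<^sub>R (A y + C (x - y)))"
        using k1 by (intro scaleR_left_mono) auto
      then show "(1/k) *\<^sub>R ?t \<le> A y + C (x - y)" using k1 by simp
    qed
    then have "(1/k) *\<^sub>R ?t \<le> 0" using p unfolding perp0_def by simp
    then have "k *\<^sub>R ((1/k) *\<^sub>R ?t) \<le> k *\<^sub>R 0" using k1 by (intro scaleR_left_mono) auto
    then show "?t \<le> 0" using k1 by simp
  qed
qed



lemma split_pos:
  assumes V: "upos_op V" and E1: "E1 \<in> uryson" and E2: "E2 \<in> uryson"
    and sum: "\<And>x. V x = E1 x + E2 x" and d: "udisj E1 E2"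
  shows "0 \<le> E1 x" "0 \<le> E2 x"
proof -
  have p: "perp0 (uabs E1) (uabs E2)" using udisj_perp0[OF E1 E2] d by simp
  have Vu: "V \<in> uryson" and Vp: "\<And>x. 0 \<le> V x" using V unfolding upos_op_def by auto
  have a1: "\<And>y. - uabs E1 y \<le> E1 y" using uabs_ge[OF E1] by (simp add: minus_le_iff)
  have a2: "\<And>y. - uabs E2 y \<le> E2 y" using uabs_ge[OF E2] by (simp add: minus_le_iff)
  have b1: "\<And>y. - uabs E1 y \<le> E1 y" "\<And>y. - uabs E1 y \<le> - E1 y" using uabs_ge[OF E1] by (auto simp: minus_le_iff)
  have b2: "\<And>y. - uabs E2 y \<le> E2 y" "\<And>y. - uabs E2 y \<le> - E2 y" using uabs_ge[OF E2] by (auto simp: minus_le_iff)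
  have "- E1 x \<le> inff (uabs E1) (uabs E2) x \<and> - E2 x \<le> inff (uabs E1) (uabs E2) x"
  proof (intro conjI inff_greatest)
    fix y assume f: "fragment y x"
    have e1: "E1 x = E1 y + V (x - y) + (- E2 (x - y))" using ury_frag[OF E1 f] sum[of "x-y"] by simp
    have "- uabs E1 y + 0 + - uabs E2 (x - y) \<le> E1 y + V (x - y) + (- E2 (x - y))"
      by (intro add_mono b1 b2 Vp)
    then have "- (uabs E1 y + uabs E2 (x - y)) \<le> E1 x" using e1 by simp
    then show "- E1 x \<le> uabs E1 y + uabs E2 (x - y)" by (simp only: minus_le_iff[of "E1 x"])
    have e2: "E2 x = E2 (x - y) + V y + (- E1 y)" using ury_frag[OF E2 f] sum[of y]
      by (simp add: algebra_simps)
    have "- (uabs E1 y + uabs E2 (x - y)) = - uabs E2 (x - y) + 0 + - uabs E1 y" by (simp add: algebra_simps)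
    also have "\<dots> \<le> E2 (x - y) + V y + (- E1 y)" by (intro add_mono b1 b2 Vp)
    also have "\<dots> = E2 x" using e2 by simp
    finally have "- (uabs E1 y + uabs E2 (x - y)) \<le> E2 x" .
    then show "- E2 x \<le> uabs E1 y + uabs E2 (x - y)" by (simp only: minus_le_iff[of "E2 x"])
  qed
  then show "0 \<le> E1 x" "0 \<le> E2 x" using p unfolding perp0_def by auto
qed

lemma adm_down: "admissible G \<Longrightarrow> x \<in> G \<Longrightarrow> fragment y x \<Longrightarrow> y \<in> G"
  unfolding admissible_def by blast

lemma adm_add: "admissible G \<Longrightarrow> x \<in> G \<Longrightarrow> y \<in> G \<Longrightarrow> disj x y \<Longrightarrow> x + y \<in> G"
  unfolding admissible_def by blast

lemma adm_zero: "admissible G \<Longrightarrow> G \<noteq> {} \<Longrightarrow> 0 \<in> G"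
  using adm_down frag_zero by blast

lemma adm_inter: "admissible G1 \<Longrightarrow> admissible G2 \<Longrightarrow> admissible (G1 \<inter> G2)"
  unfolding admissible_def by blast

lemma adm_univ: "admissible UNIV" unfolding admissible_def by blast

lemma adm_Inter: "finite F \<Longrightarrow> F \<subseteq> Collect admissible \<Longrightarrow> admissible (\<Inter>F)"
  by (induction F rule: finite_induct) (auto simp: adm_univ adm_inter)

lemma frag_sum_disj: "disj y1 y2 \<Longrightarrow> fragment y1 (y1 + y2)"
  by (simp add: fragment_def)

lemma piD_set_bnd: assumes A: "upos_op A" shows "\<forall>v\<in>insert 0 {A y | y. fragment y x \<and> y \<in> G}. v \<le> A x"
proof
  fix v assume "v \<in> insert 0 {A y | y. fragment y x \<and> y \<in> G}"
  then consider "v = 0" | y where "v = A y" "fragment y x" by blast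
  then show "v \<le> A x"
  proof cases
    case 1 then show ?thesis using A unfolding upos_op_def by simp
  next
    case 2 then show ?thesis using A ury_pos_mono[of A y x] unfolding upos_op_def op_pos_def by simp
  qed
qed

lemma piD_bdd: "upos_op A \<Longrightarrow> bdd_above (insert 0 {A y | y. fragment y x \<and> y \<in> G})"
  using piD_set_bnd unfolding bdd_above_def by blast

lemma piD_bdd': "upos_op A \<Longrightarrow> bdd_above {A y | y. fragment y x \<and> y \<in> G}"
proof -
  assume A: "upos_op A"
  have "bdd_above (insert 0 {A y | y. fragment y x \<and> y \<in> G})" by (rule piD_bdd[OF A])
  then show ?thesis by simp
qed

lemma piD_upper: "upos_op A \<Longrightarrow> y \<in> G \<Longrightarrow> fragment y x \<Longrightarrow> A y \<le> piD_pos G A x"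
  unfolding piD_pos_def by (rule cSup_upper) (auto intro: piD_bdd piD_bdd')

lemma piD_nonneg: "upos_op A \<Longrightarrow> 0 \<le> piD_pos G A x"
  unfolding piD_pos_def by (rule cSup_upper) (auto intro: piD_bdd piD_bdd')

lemma piD_least: "0 \<le> c \<Longrightarrow> (\<And>y. fragment y x \<Longrightarrow> y \<in> G \<Longrightarrow> A y \<le> c) \<Longrightarrow> piD_pos G A x \<le> c"
  unfolding piD_pos_def by (rule cSup_least) auto

lemma piD_le: assumes A: "upos_op A" shows "piD_pos G A x \<le> A x"
  using piD_set_bnd[OF A, of x G] unfolding piD_pos_def by (intro cSup_least) auto

lemma piD_empty: "piD_pos {} A = (\<lambda>x. 0)"
  unfolding piD_pos_def by simp

lemma piD_ne: assumes A: "upos_op A" and G: "admissible G" "G \<noteq> {}"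
  shows "piD_pos G A x = Sup {A y | y. fragment y x \<and> y \<in> G}"
proof -
  have "0 \<in> {A y | y. fragment y x \<and> y \<in> G}" using adm_zero[OF G] A ury_zero
    unfolding upos_op_def by (metis (mono_tags, lifting) frag_zero mem_Collect_eq)
  then show ?thesis unfolding piD_pos_def by (simp add: insert_absorb)
qed

lemma piD_split_set:
  assumes A: "A \<in> uryson" and G: "admissible G" and xz: "disj x z"
  shows "{A y | y. fragment y (x + z) \<and> y \<in> G}
       = {a + b | a b. a \<in> {A y | y. fragment y x \<and> y \<in> G} \<and> b \<in> {A y | y. fragment y z \<and> y \<in> G}}"
proof (intro set_eqI iffI)
  fix v assume "v \<in> {A y | y. fragment y (x + z) \<and> y \<in> G}"
  then obtain y where v: "v = A y" and f: "fragment y (x + z)" and yG: "y \<in> G" by blast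
  obtain y1 y2 where y: "y = y1 + y2" and f1: "fragment y1 x" and f2: "fragment y2 z"
    using frag_split_bwd[OF xz f] by blast
  have d: "disj y1 y2" using frag_split_fwd[OF xz f1 f2] by auto
  have "y1 \<in> G" using adm_down[OF G yG] frag_sum_disj[OF d] y by simp
  moreover have "y2 \<in> G" using adm_down[OF G yG] frag_sum_disj[of y2 y1] d y
    by (simp add: disj_sym add.commute)
  moreover have "v = A y1 + A y2" using ury_add[OF A d] y v by simp
  ultimately show "v \<in> {a + b | a b. a \<in> {A y | y. fragment y x \<and> y \<in> G} \<and> b \<in> {A y | y. fragment y z \<and> y \<in> G}}"
    using f1 f2 by blast
next
  fix v assume "v \<in> {a + b | a b. a \<in> {A y | y. fragment y x \<and> y \<in> G} \<and> b \<in> {A y | y. fragment y z \<and> y \<in> G}}"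
  then obtain y1 y2 where v: "v = A y1 + A y2" and f1: "fragment y1 x" and f2: "fragment y2 z"
    and G1: "y1 \<in> G" and G2: "y2 \<in> G" by blast
  have d: "fragment (y1 + y2) (x + z)" "disj y1 y2" using frag_split_fwd[OF xz f1 f2] by auto
  have "v = A (y1 + y2)" using ury_add[OF A d(2)] v by simp
  moreover have "y1 + y2 \<in> G" using adm_add[OF G G1 G2 d(2)] .
  ultimately show "v \<in> {A y | y. fragment y (x + z) \<and> y \<in> G}" using d(1) by blast
qed

lemma piD_upos: assumes A: "upos_op A" and G: "admissible G" shows "upos_op (piD_pos G A)"
proof (cases "G = {}")
  case True
  then show ?thesis by (simp add: piD_empty upos_op_def ury_zero_op)
next
  case False
  have Au: "A \<in> uryson" using A upos_op_def by blast
  have "orth_additive (piD_pos G A)" unfolding orth_additive_def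
  proof (intro allI impI)
    fix x z :: 'a assume xz: "disj x z"
    have ne: "\<And>x. {A y | y. fragment y x \<and> y \<in> G} \<noteq> {}" using adm_zero[OF G False] frag_zero by blast
    have bd: "\<And>x. bdd_above {A y | y. fragment y x \<and> y \<in> G}"
      by (rule piD_bdd'[OF A])
    show "piD_pos G A (x + z) = piD_pos G A x + piD_pos G A z"
      unfolding piD_ne[OF A G False] piD_split_set[OF Au G xz]
      by (rule Sup_sum[OF ne ne bd bd])
  qed
  moreover have "order_bounded_op (piD_pos G A)" unfolding order_bounded_op_def
  proof (intro allI impI)
    fix X :: "'a set" assume "\<exists>a b. \<forall>x\<in>X. a \<le> x \<and> x \<le> b"
    then obtain a b where ab: "\<forall>x\<in>X. a \<le> x \<and> x \<le> b" by blast
    obtain c d where cd: "\<forall>x\<in>X. c \<le> A x \<and> A x \<le> d" using ury_bnd[OF Au ab] by blast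
    show "\<exists>c d. \<forall>x\<in>X. c \<le> piD_pos G A x \<and> piD_pos G A x \<le> d"
      using cd piD_nonneg[OF A] piD_le[OF A] by (meson order.trans)
  qed
  ultimately show ?thesis using piD_nonneg[OF A] by (simp add: upos_op_def uryson_def)
qed

lemma piD_mono_op: assumes A: "upos_op A" and A': "upos_op A'" and le: "\<And>x. A x \<le> A' x"
  shows "piD_pos G A x \<le> piD_pos G A' x"
proof (rule piD_least[OF piD_nonneg[OF A']])
  fix y assume "fragment y x" "y \<in> G"
  then have "A' y \<le> piD_pos G A' x" by (intro piD_upper[OF A'])
  then show "A y \<le> piD_pos G A' x" using le[of y] by (rule order.trans[rotated])
qed

lemma piD_mono_set: assumes A: "upos_op A" and GG: "G \<subseteq> G'"
  shows "piD_pos G A x \<le> piD_pos G' A x"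
proof (rule piD_least[OF piD_nonneg[OF A]])
  fix y assume "fragment y x" "y \<in> G"
  then show "A y \<le> piD_pos G' A x" using GG by (intro piD_upper[OF A]) auto
qed

lemma piD_comp: assumes A: "upos_op A" and G1: "admissible G1" and G2: "admissible G2"
  shows "piD_pos G1 (piD_pos G2 A) x = piD_pos (G1 \<inter> G2) A x"
proof (rule order.antisym)
  show "piD_pos G1 (piD_pos G2 A) x \<le> piD_pos (G1 \<inter> G2) A x"
  proof (rule piD_least[OF piD_nonneg[OF A]])
    fix y assume yx: "fragment y x" and yG: "y \<in> G1"
    show "piD_pos G2 A y \<le> piD_pos (G1 \<inter> G2) A x"
    proof (rule piD_least[OF piD_nonneg[OF A]])
      fix z assume zy: "fragment z y" and zG: "z \<in> G2"
      have "fragment z x" using frag_trans[OF zy yx] by blast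
      moreover have "z \<in> G1" using adm_down[OF G1 yG zy] .
      ultimately show "A z \<le> piD_pos (G1 \<inter> G2) A x" using zG by (intro piD_upper[OF A]) auto
    qed
  qed
  have P2: "upos_op (piD_pos G2 A)" using piD_upos[OF A G2] .
  show "piD_pos (G1 \<inter> G2) A x \<le> piD_pos G1 (piD_pos G2 A) x"
  proof (rule piD_least[OF piD_nonneg[OF P2]])
    fix z assume zx: "fragment z x" and zG: "z \<in> G1 \<inter> G2"
    have "A z \<le> piD_pos G2 A z" using zG by (intro piD_upper[OF A]) auto
    also have "\<dots> \<le> piD_pos G1 (piD_pos G2 A) x" using zG zx by (intro piD_upper[OF P2]) auto
    finally show "A z \<le> piD_pos G1 (piD_pos G2 A) x" .
  qed
qed

lemma piD_univ: assumes A: "upos_op A" shows "piD_pos UNIV A = A"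
proof
  fix x show "piD_pos UNIV A x = A x"
    using piD_le[OF A] piD_upper[OF A, of x UNIV x] by (simp add: order.antisym)
qed

lemma piD_zero_op: "piD_pos G (\<lambda>x. 0) = (\<lambda>x. 0)"
  unfolding piD_pos_def by (auto intro!: ext cSup_eq_maximum)

lemma piD_idem: assumes A: "upos_op A" and G: "admissible G" shows "piD_pos G (piD_pos G A) = piD_pos G A"
proof
  fix x show "piD_pos G (piD_pos G A) x = piD_pos G A x" using piD_comp[OF A G G, of x] by simp
qed

lemma piD_eq_posop: assumes T: "T \<in> uryson" and p: "\<And>x. 0 \<le> T x" shows "piD D T = piD_pos D T"
  unfolding piD_def upos_pos[OF T p] uneg_pos[OF T p] piD_zero_op by simp



lemma piD_solid: assumes V: "upos_op V" and W: "upos_op W" and le: "\<And>x. V x \<le> W x"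
  and WD: "piD_pos D W = W"
  shows "piD_pos D V = V"
proof
  fix x
  have Vu: "V \<in> uryson" and Wu: "W \<in> uryson" using V W upos_op_def by auto
  let ?s = "piD_pos D V x"
  have "piD_pos D W x \<le> W x - V x + ?s"
  proof (rule piD_least)
    show "0 \<le> W x - V x + ?s" using le[of x] piD_nonneg[OF V, of D x] by (simp add: add_nonneg_nonneg)
    fix y assume yx: "fragment y x" and yD: "y \<in> D"
    have "V x - V y = V (x - y)" using ury_frag[OF Vu yx] by simp
    also have "\<dots> \<le> W (x - y)" using le .
    also have "\<dots> = W x - W y" using ury_frag[OF Wu yx] by simp
    finally have "W y \<le> W x - V x + V y" by (simp add: algebra_simps)
    also have "V y \<le> ?s" using piD_upper[OF V yD yx] .
    finally show "W y \<le> W x - V x + ?s" by (simp add: add_left_mono)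
  qed
  then have "W x \<le> W x - V x + ?s" using WD by (simp add: fun_eq_iff)
  then have "V x \<le> ?s" by (simp add: le_diff_eq diff_le_eq algebra_simps)
  then show "?s = V x" using piD_le[OF V] by (simp add: order.antisym)
qed

lemma Inf_sum_directed:
  fixes f g :: "'i \<Rightarrow> 'b::{ordered_real_vector,conditionally_complete_lattice}"
  assumes I: "I \<noteq> {}" and f0: "\<And>i. i \<in> I \<Longrightarrow> 0 \<le> f i" and g0: "\<And>i. i \<in> I \<Longrightarrow> 0 \<le> g i"
    and dir: "\<And>i j. i \<in> I \<Longrightarrow> j \<in> I \<Longrightarrow> \<exists>k\<in>I. f k \<le> f i \<and> g k \<le> g j"
  shows "Inf ((\<lambda>i. f i + g i) ` I) = Inf (f ` I) + Inf (g ` I)"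
proof (rule order.antisym)
  have bf: "bdd_below (f ` I)" and bg: "bdd_below (g ` I)" and bfg: "bdd_below ((\<lambda>i. f i + g i) ` I)"
    using f0 g0 unfolding bdd_below_def by (auto intro: add_nonneg_nonneg)
  show "Inf (f ` I) + Inf (g ` I) \<le> Inf ((\<lambda>i. f i + g i) ` I)"
    using I bf bg by (intro cInf_greatest) (auto intro!: add_mono cInf_lower)
  let ?m = "Inf ((\<lambda>i. f i + g i) ` I)"
  have "\<forall>j\<in>I. ?m - Inf (f ` I) \<le> g j"
  proof
    fix j assume j: "j \<in> I"
    have "\<forall>i\<in>I. ?m - g j \<le> f i"
    proof
      fix i assume i: "i \<in> I"
      obtain k where k: "k \<in> I" "f k \<le> f i" "g k \<le> g j" using dir[OF i j] by blast
      have "?m \<le> f k + g k" using k(1) bfg by (intro cInf_lower) auto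
      also have "\<dots> \<le> f i + g j" using k by (simp add: add_mono)
      finally show "?m - g j \<le> f i" by (simp add: diff_le_eq)
    qed
    then have "?m - g j \<le> Inf (f ` I)" using I by (intro cInf_greatest) auto
    then show "?m - Inf (f ` I) \<le> g j" by (simp add: diff_le_eq le_diff_eq add.commute)
  qed
  then have "?m - Inf (f ` I) \<le> Inf (g ` I)" using I by (intro cInf_greatest) auto
  then show "?m \<le> Inf (f ` I) + Inf (g ` I)" by (simp add: diff_le_eq add.commute)
qed

definition GGof :: "'a set set \<Rightarrow> 'a set set" where
  "GGof AA = {\<Inter>F | F. finite F \<and> F \<subseteq> AA}"

definition Qop :: "'a::{ordered_real_vector,lattice} set set \<Rightarrow> ('a \<Rightarrow> 'b::{ordered_real_vector,conditionally_complete_lattice}) \<Rightarrow> 'a \<Rightarrow> 'b" where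
  "Qop AA A x = Inf ((\<lambda>G. piD_pos G A x) ` GGof AA)"

lemma GG_univ: "UNIV \<in> GGof AA"
  unfolding GGof_def by (rule CollectI, rule exI[of _ "{}"]) auto

lemma GG_ne: "GGof AA \<noteq> {}" using GG_univ by blast

lemma GG_inter: "G1 \<in> GGof AA \<Longrightarrow> G2 \<in> GGof AA \<Longrightarrow> G1 \<inter> G2 \<in> GGof AA"
  unfolding GGof_def
proof clarify
  fix F1 F2 assume "finite F1" "F1 \<subseteq> AA" "finite F2" "F2 \<subseteq> AA"
  then show "\<exists>F. \<Inter>F1 \<inter> \<Inter>F2 = \<Inter>F \<and> finite F \<and> F \<subseteq> AA"
    by (intro exI[of _ "F1 \<union> F2"]) auto
qed

lemma GG_base: "D \<in> AA \<Longrightarrow> D \<in> GGof AA"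
  unfolding GGof_def by (rule CollectI, rule exI[of _ "{D}"]) auto

lemma GG_adm: "AA \<subseteq> Collect admissible \<Longrightarrow> G \<in> GGof AA \<Longrightarrow> admissible G"
  unfolding GGof_def using adm_Inter by blast

lemma GG_induct:
  assumes G: "G \<in> GGof AA" and base: "P UNIV" and step: "\<And>D G. D \<in> AA \<Longrightarrow> G \<in> GGof AA \<Longrightarrow> P G \<Longrightarrow> P (D \<inter> G)"
  shows "P G"
proof -
  obtain F where F: "G = \<Inter>F" "finite F" "F \<subseteq> AA" using G unfolding GGof_def by blast
  have "finite F \<Longrightarrow> F \<subseteq> AA \<Longrightarrow> P (\<Inter>F) \<and> \<Inter>F \<in> GGof AA"
  proof (induction F rule: finite_induct)
    case empty then show ?case using base GG_univ by simp
  next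
    case (insert D F)
    then show ?case using step[of D "\<Inter>F"] GG_inter[OF GG_base] by auto
  qed
  then show ?thesis using F by blast
qed

lemma Q_lower: "upos_op A \<Longrightarrow> G \<in> GGof AA \<Longrightarrow> Qop AA A x \<le> piD_pos G A x"
  unfolding Qop_def by (rule cInf_lower) (auto simp: bdd_below_def intro: piD_nonneg)

lemma Q_greatest: "(\<And>G. G \<in> GGof AA \<Longrightarrow> c \<le> piD_pos G A x) \<Longrightarrow> c \<le> Qop AA A x"
  unfolding Qop_def by (rule cInf_greatest) (auto simp: GG_ne)

lemma Q_nonneg: "upos_op A \<Longrightarrow> 0 \<le> Qop AA A x"
  by (rule Q_greatest) (rule piD_nonneg)

lemma Q_le: "upos_op A \<Longrightarrow> Qop AA A x \<le> A x"
proof -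
  assume A: "upos_op A"
  have "Qop AA A x \<le> piD_pos UNIV A x" by (rule Q_lower[OF A GG_univ])
  then show ?thesis using piD_univ[OF A] by simp
qed

lemma Q_upos: assumes AA: "AA \<subseteq> Collect admissible" and A: "upos_op A" shows "upos_op (Qop AA A)"
proof -
  have Au: "A \<in> uryson" using A upos_op_def by blast
  have "orth_additive (Qop AA A)" unfolding orth_additive_def
  proof (intro allI impI)
    fix x z :: 'a assume xz: "disj x z"
    have eq: "\<And>G. G \<in> GGof AA \<Longrightarrow> piD_pos G A (x + z) = piD_pos G A x + piD_pos G A z"
      using piD_upos[OF A GG_adm[OF AA]] unfolding upos_op_def uryson_def orth_additive_def
      using xz by blast
    have "Qop AA A (x + z) = Inf ((\<lambda>G. piD_pos G A x + piD_pos G A z) ` GGof AA)"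
      unfolding Qop_def using eq by (simp cong: image_cong)
    also have "\<dots> = Qop AA A x + Qop AA A z"
      unfolding Qop_def
    proof (rule Inf_sum_directed[OF GG_ne])
      fix i j assume i: "i \<in> GGof AA" and j: "j \<in> GGof AA"
      show "\<exists>k\<in>GGof AA. piD_pos k A x \<le> piD_pos i A x \<and> piD_pos k A z \<le> piD_pos j A z"
        using GG_inter[OF i j] piD_mono_set[OF A inf_le1[of i j]] piD_mono_set[OF A inf_le2[of i j]] by blast
    qed (auto intro: piD_nonneg[OF A])
    finally show "Qop AA A (x + z) = Qop AA A x + Qop AA A z" .
  qed
  moreover have "order_bounded_op (Qop AA A)" unfolding order_bounded_op_def
  proof (intro allI impI)
    fix X :: "'a set" assume "\<exists>a b. \<forall>x\<in>X. a \<le> x \<and> x \<le> b"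
    then obtain a b where ab: "\<forall>x\<in>X. a \<le> x \<and> x \<le> b" by blast
    obtain c d where cd: "\<forall>x\<in>X. c \<le> A x \<and> A x \<le> d" using ury_bnd[OF Au ab] by blast
    show "\<exists>c d. \<forall>x\<in>X. c \<le> Qop AA A x \<and> Qop AA A x \<le> d"
      using cd Q_nonneg[OF A] Q_le[OF A] by (blast intro: order.trans)
  qed
  ultimately show ?thesis using Q_nonneg[OF A] by (simp add: upos_op_def uryson_def)
qed

lemma Q_zero: "Qop AA (\<lambda>x. 0::'b::{ordered_real_vector,conditionally_complete_lattice}) = (\<lambda>x. 0)"
proof
  fix x
  have "(\<lambda>G. (0::'b)) ` GGof AA = {0}" using GG_ne[of AA] by auto
  then show "Qop AA (\<lambda>x. 0::'b) x = 0" unfolding Qop_def piD_zero_op by simp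
qed



context
  fixes AA :: "'a::{ordered_real_vector,lattice} set set"
  assumes AAadm: "AA \<subseteq> Collect admissible" and AAup: "upward_saturated AA"
begin

lemma uabs_vanish:
  fixes S :: "'a \<Rightarrow> 'b::{ordered_real_vector,conditionally_complete_lattice}"
  assumes S: "S \<in> uryson" and D: "admissible (null_set S)" and y: "y \<in> null_set S"
  shows "uabs S y = 0"
proof -
  have "uabs S y \<le> 0" unfolding uabs_supf[OF S]
  proof (rule supf_least)
    fix w assume f: "fragment w y"
    have "w \<in> null_set S" "y - w \<in> null_set S"
      using adm_down[OF D y f] adm_down[OF D y frag_compl[OF f]] by auto
    then show "S w + - S (y - w) \<le> 0" by (simp add: null_set_def)
  qed
  then show ?thesis using uabs_nonneg[OF S] by (simp add: order.antisym)
qed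

lemma B_char_if:
  fixes T :: "'a \<Rightarrow> 'b::{ordered_real_vector,conditionally_complete_lattice}"
  assumes T: "T \<in> uryson" and h: "\<And>D. D \<in> AA \<Longrightarrow> piD_pos D (uabs T) = uabs T"
  shows "T \<in> uorth (U_fam AA)"
  unfolding uorth_def
proof (intro CollectI conjI ballI T)
  fix S :: "'a \<Rightarrow> 'b" assume "S \<in> U_fam AA"
  then have S: "S \<in> uryson" and DA: "null_set S \<in> AA" unfolding U_fam_def by auto
  define D where "D = null_set S"
  have Dadm: "admissible D" using DA AAadm D_def by blast
  have aS: "upos_op (uabs S)" and aT: "upos_op (uabs T)" using upos_op_uabs S T by auto
  have "perp0 (uabs S) (uabs T)"
  proof (rule perp0_I[OF aS aT])
    fix x
    let ?t = "inff (uabs S) (uabs T) x"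
    have t0: "?t \<le> uabs T x"
      using inff_lower[OF uabs_ury[OF S] uabs_ury[OF T] frag_zero[of x]] ury_zero[OF uabs_ury[OF S]]
      by simp
    have "piD_pos D (uabs T) x \<le> uabs T x - ?t"
    proof (rule piD_least)
      show "0 \<le> uabs T x - ?t" using t0 by simp
      fix y assume yx: "fragment y x" and yD: "y \<in> D"
      have "?t \<le> uabs S y + uabs T (x - y)"
        by (rule inff_lower[OF uabs_ury[OF S] uabs_ury[OF T] yx])
      also have "uabs S y = 0" using uabs_vanish[OF S] Dadm yD D_def by blast
      also have "uabs T (x - y) = uabs T x - uabs T y" using ury_frag[OF uabs_ury[OF T] yx] by simp
      finally show "uabs T y \<le> uabs T x - ?t" by (simp add: algebra_simps)
    qed
    then show "?t \<le> 0" using h[OF DA] D_def by (simp add: algebra_simps)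
  qed
  then show "udisj S T" using udisj_perp0[OF S T] by simp
qed

lemma B_char_only:
  fixes T :: "'a \<Rightarrow> 'b::{ordered_real_vector,conditionally_complete_lattice}"
  assumes T: "T \<in> uorth (U_fam AA)" and D: "D \<in> AA"
  shows "piD_pos D (uabs T) = uabs T"
proof -
  have Tu: "T \<in> uryson" using T uorth_def by blast
  define A where "A = uabs T"
  have A: "upos_op A" using upos_op_uabs[OF Tu] A_def by simp
  have Au: "A \<in> uryson" using A upos_op_def by blast
  have Dadm: "admissible D" using D AAadm by blast
  define V where "V = (\<lambda>x. A x - piD_pos D A x)"
  have Vu: "V \<in> uryson" unfolding V_def using ury_minus[OF Au] piD_upos[OF A Dadm] upos_op_def by blast
  have Vp: "\<And>x. 0 \<le> V x" unfolding V_def using piD_le[OF A] by simp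
  have adm: "admissible (null_set V)" unfolding admissible_def null_set_def
  proof (intro conjI ballI allI impI)
    fix x y assume x: "x \<in> {e. V e = 0}" and f: "fragment y x"
    have "V y \<le> V x" using ury_pos_mono[OF Vu _ f] Vp by (simp add: op_pos_def)
    then show "y \<in> {e. V e = 0}" using x Vp[of y] by (simp add: order.antisym)
  next
    fix x y assume "x \<in> {e. V e = 0}" "y \<in> {e. V e = 0}" "disj x y"
    then show "x + y \<in> {e. V e = 0}" using ury_add[OF Vu] by simp
  qed
  have sub: "D \<subseteq> null_set V"
  proof
    fix y assume y: "y \<in> D"
    have "A y \<le> piD_pos D A y" using piD_upper[OF A y frag_refl] .
    then show "y \<in> null_set V" using Vp[of y] unfolding null_set_def V_def
      by (simp add: order.antisym)
  qed
  have "null_set V \<in> AA" using AAup D adm sub unfolding upward_saturated_def by blast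
  then have "V \<in> U_fam AA" using Vu U_fam_def by blast
  then have "udisj V T" using T uorth_def by blast
  then have "uinf (uabs V) (uabs T) = (\<lambda>x. 0)" unfolding udisj_def .
  moreover have "uabs V = V" using uabs_pos[OF Vu Vp] .
  moreover have "uinf V A = V" using Vu by (rule uinf_le) (simp add: op_le_def op_pos_def V_def piD_nonneg[OF A])
  ultimately have "V = (\<lambda>x. 0)" using A_def by simp
  then show ?thesis unfolding A_def[symmetric] V_def by (simp add: fun_eq_iff)
qed

lemma B_GG:
  fixes T :: "'a \<Rightarrow> 'b::{ordered_real_vector,conditionally_complete_lattice}"
  assumes T: "T \<in> uorth (U_fam AA)" and G: "G \<in> GGof AA"
  shows "piD_pos G (uabs T) = uabs T"
proof (rule GG_induct[OF G, where P="\<lambda>G. piD_pos G (uabs T) = uabs T"])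
  have Tu: "T \<in> uryson" using T uorth_def by blast
  show "piD_pos UNIV (uabs T) = uabs T" using piD_univ upos_op_uabs Tu by blast
  fix D G assume D: "D \<in> AA" and G: "G \<in> GGof AA" and IH: "piD_pos G (uabs T) = uabs T"
  have "piD_pos (D \<inter> G) (uabs T) = piD_pos D (piD_pos G (uabs T))"
    using piD_comp[OF upos_op_uabs[OF Tu]] AAadm D GG_adm[OF AAadm G] by (auto intro!: ext)
  then show "piD_pos (D \<inter> G) (uabs T) = uabs T" using IH B_char_only[OF T D] by simp
qed

lemma B_ury: "T \<in> uorth (U_fam AA) \<Longrightarrow> T \<in> uryson" using uorth_def by blast

lemma B_perp0: "T \<in> uorth X \<longleftrightarrow> T \<in> uryson \<and> (\<forall>S\<in>X. S \<in> uryson \<longrightarrow> perp0 (uabs S) (uabs T)) \<and> (\<forall>S\<in>X. udisj S T)"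
  unfolding uorth_def using udisj_perp0 by blast

end


lemma uorth_I: "T \<in> uryson \<Longrightarrow> (X::('a::{ordered_real_vector,lattice} \<Rightarrow> 'b::{ordered_real_vector,conditionally_complete_lattice}) set) \<subseteq> uryson \<Longrightarrow> (\<And>S. S \<in> X \<Longrightarrow> perp0 (uabs S) (uabs T)) \<Longrightarrow> T \<in> uorth X"
  unfolding uorth_def using udisj_perp0 by blast

lemma uorth_D: "T \<in> uorth X \<Longrightarrow> (X::('a::{ordered_real_vector,lattice} \<Rightarrow> 'b::{ordered_real_vector,conditionally_complete_lattice}) set) \<subseteq> uryson \<Longrightarrow> S \<in> X \<Longrightarrow> perp0 (uabs S) (uabs T)"
  unfolding uorth_def using udisj_perp0 by blast

lemma uorth_ury: "T \<in> uorth X \<Longrightarrow> T \<in> uryson" unfolding uorth_def by blast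

lemma uorth_plus: fixes X :: "('a::{ordered_real_vector,lattice} \<Rightarrow> 'b::{ordered_real_vector,conditionally_complete_lattice}) set" assumes X: "X \<subseteq> uryson" and T1: "T1 \<in> uorth X" and T2: "T2 \<in> uorth X"
  shows "(\<lambda>x. T1 x + T2 x) \<in> uorth X"
proof (rule uorth_I[OF ury_plus[OF uorth_ury[OF T1] uorth_ury[OF T2]] X])
  fix S assume S: "S \<in> X"
  have Su: "S \<in> uryson" using S X by blast
  have u1: "T1 \<in> uryson" and u2: "T2 \<in> uryson" using T1 T2 uorth_ury by auto
  have "perp0 (uabs S) (\<lambda>x. uabs T1 x + uabs T2 x)"
    using perp0_add[OF upos_op_uabs[OF Su] upos_op_uabs[OF u1] upos_op_uabs[OF u2]]
      uorth_D[OF T1 X S] uorth_D[OF T2 X S] by blast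
  then show "perp0 (uabs S) (uabs (\<lambda>x. T1 x + T2 x))"
    using perp0_mono[OF upos_op_uabs[OF Su] upos_op_plus[OF upos_op_uabs[OF u1] upos_op_uabs[OF u2]]
      upos_op_uabs[OF ury_plus[OF u1 u2]] uabs_triangle[OF u1 u2]] by blast
qed

lemma uorth_scale: fixes X :: "('a::{ordered_real_vector,lattice} \<Rightarrow> 'b::{ordered_real_vector,conditionally_complete_lattice}) set" assumes X: "X \<subseteq> uryson" and T: "T \<in> uorth X"
  shows "(\<lambda>x. c *\<^sub>R T x) \<in> uorth X"
proof (rule uorth_I[OF ury_scale[OF uorth_ury[OF T]] X])
  fix S assume S: "S \<in> X"
  have Su: "S \<in> uryson" using S X by blast
  have u: "T \<in> uryson" using T uorth_ury by auto
  have "perp0 (uabs S) (\<lambda>x. \<bar>c\<bar> *\<^sub>R uabs T x)"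
    using perp0_scale[OF upos_op_uabs[OF Su] upos_op_uabs[OF u]] uorth_D[OF T X S] by simp
  then show "perp0 (uabs S) (uabs (\<lambda>x. c *\<^sub>R T x))"
    using perp0_mono[OF upos_op_uabs[OF Su] upos_op_scale[OF upos_op_uabs[OF u]]
      upos_op_uabs[OF ury_scale[OF u]] uabs_scale[OF u]] by simp
qed

lemma uorth_minus: fixes X :: "('a::{ordered_real_vector,lattice} \<Rightarrow> 'b::{ordered_real_vector,conditionally_complete_lattice}) set" assumes X: "X \<subseteq> uryson" and T1: "T1 \<in> uorth X" and T2: "T2 \<in> uorth X"
  shows "(\<lambda>x. T1 x - T2 x) \<in> uorth X"
  using uorth_plus[OF X T1 uorth_scale[OF X T2, of "-1"]] by simp

lemma uorth_zero: fixes X :: "('a::{ordered_real_vector,lattice} \<Rightarrow> 'b::{ordered_real_vector,conditionally_complete_lattice}) set" assumes X: "X \<subseteq> uryson" shows "(\<lambda>x. 0) \<in> uorth X"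
proof (rule uorth_I[OF ury_zero_op X])
  fix S assume "S \<in> X" then have "S \<in> uryson" using X by blast
  then show "perp0 (uabs S) (uabs (\<lambda>x. 0))" unfolding uabs_zero by (intro perp0_zero upos_op_uabs)
qed

lemma uorth_solid: fixes X :: "('a::{ordered_real_vector,lattice} \<Rightarrow> 'b::{ordered_real_vector,conditionally_complete_lattice}) set" assumes X: "X \<subseteq> uryson" and S': "S' \<in> uryson" and T: "T \<in> uorth X"
  and le: "op_le (uabs S') (uabs T)" shows "S' \<in> uorth X"
proof (rule uorth_I[OF S' X])
  fix S assume S: "S \<in> X"
  have Su: "S \<in> uryson" using S X by blast
  show "perp0 (uabs S) (uabs S')"
    using perp0_mono[OF upos_op_uabs[OF Su] upos_op_uabs[OF uorth_ury[OF T]] upos_op_uabs[OF S']]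
      le uorth_D[OF T X S] unfolding op_le_def op_pos_def by simp
qed

lemma Ufam_ury: "U_fam AA \<subseteq> uryson" unfolding U_fam_def by blast

definition Pop :: "'a::{ordered_real_vector,lattice} set set \<Rightarrow> ('a \<Rightarrow> 'b::{ordered_real_vector,conditionally_complete_lattice}) \<Rightarrow> 'a \<Rightarrow> 'b" where
  "Pop AA T = (\<lambda>x. Qop AA (upos T) x - Qop AA (uneg T) x)"

context
  fixes AA :: "'a::{ordered_real_vector,lattice} set set"
  assumes AAadm: "AA \<subseteq> Collect admissible" and AAup: "upward_saturated AA"
begin

lemma Q_in_B: assumes A: "upos_op A" shows "Qop AA A \<in> uorth (U_fam AA)"
proof (rule B_char_if[OF AAadm AAup])
  have QA: "upos_op (Qop AA A)" using Q_upos[OF AAadm A] .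
  then show "Qop AA A \<in> uryson" using upos_op_def by blast
  fix D assume D: "D \<in> AA"
  have Dadm: "admissible D" using D AAadm by blast
  have ua: "uabs (Qop AA A) = Qop AA A" using QA uabs_pos upos_op_def by blast
  show "piD_pos D (uabs (Qop AA A)) = uabs (Qop AA A)"
    unfolding ua
    by (rule piD_solid[OF QA piD_upos[OF A Dadm] Q_lower[OF A GG_base[OF D]] piD_idem[OF A Dadm]])
qed

lemma P_in_B: fixes T :: "'a \<Rightarrow> 'b::{ordered_real_vector,conditionally_complete_lattice}" assumes T: "T \<in> uryson" shows "Pop AA T \<in> uorth (U_fam AA)"
proof -
  have p: "upos_op (upos T)" "upos_op (uneg T)"
    using upos_ury[OF T] upos_ge[OF T] uneg_ury[OF T] uneg_nonneg[OF T] upos_op_def by auto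
  show ?thesis unfolding Pop_def by (rule uorth_minus[OF Ufam_ury Q_in_B[OF p(1)] Q_in_B[OF p(2)]])
qed

lemma K_lemma: fixes W :: "'a \<Rightarrow> 'b::{ordered_real_vector,conditionally_complete_lattice}" assumes A: "upos_op A" and W: "W \<in> uorth (U_fam AA)"
  shows "perp0 (uabs W) (\<lambda>x. A x - Qop AA A x)"
proof -
  have Wu: "W \<in> uryson" using W uorth_ury by blast
  define C where "C = uabs W"
  have C: "upos_op C" using upos_op_uabs[OF Wu] C_def by simp
  have Cu: "C \<in> uryson" using C upos_op_def by blast
  have QA: "upos_op (Qop AA A)" using Q_upos[OF AAadm A] .
  have Au: "A \<in> uryson" using A upos_op_def by blast
  define V where "V = (\<lambda>x. A x - Qop AA A x)"
  have V: "upos_op V" unfolding V_def upos_op_def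
    using ury_minus[OF Au] QA Q_le[OF A] upos_op_def by auto
  have Vu: "V \<in> uryson" using V upos_op_def by blast
  have CG: "\<And>G. G \<in> GGof AA \<Longrightarrow> piD_pos G C = C" using B_GG[OF AAadm AAup W] C_def by blast
  show ?thesis unfolding C_def[symmetric] V_def[symmetric]
  proof (rule perp0_I[OF C V])
    fix x
    let ?t = "inff C V x"
    have tC: "?t \<le> C x" using inff_lower[OF Cu Vu frag_refl[of x]] ury_zero[OF Vu] by simp
    have "\<And>G. G \<in> GGof AA \<Longrightarrow> ?t + Qop AA A x \<le> piD_pos G A x"
    proof -
      fix G assume G: "G \<in> GGof AA"
      have Gadm: "admissible G" using GG_adm[OF AAadm G] .
      define d where "d = piD_pos G A x - Qop AA A x"
      have d0: "0 \<le> d" using Q_lower[OF A G] d_def by simp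
      have Z: "upos_op (\<lambda>x. piD_pos G A x - Qop AA A x)" unfolding upos_op_def
      proof
        show "(\<lambda>x. piD_pos G A x - Qop AA A x) \<in> uryson"
          using ury_minus piD_upos[OF A Gadm] QA unfolding upos_op_def by blast
        show "\<forall>x. 0 \<le> piD_pos G A x - Qop AA A x" using Q_lower[OF A G] by simp
      qed
      have "piD_pos G C x \<le> C x - ?t + d"
      proof (rule piD_least)
        show "0 \<le> C x - ?t + d" using tC d0 by (simp add: add_nonneg_nonneg)
        fix y assume yx: "fragment y x" and yG: "y \<in> G"
        have "?t \<le> C (x - y) + V (x - (x - y))" using inff_lower[OF Cu Vu frag_compl[OF yx]] .
        also have "x - (x - y) = y" by simp
        also have "C (x - y) = C x - C y" using ury_frag[OF Cu yx] by simp
        also have "V y \<le> d"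
        proof -
          have "A y \<le> piD_pos G A y" using piD_upper[OF A yG frag_refl] .
          moreover have "piD_pos G A y - Qop AA A y \<le> piD_pos G A x - Qop AA A x"
            using ury_pos_mono[of "\<lambda>x. piD_pos G A x - Qop AA A x" y x] Z yx
            unfolding upos_op_def op_pos_def by auto
          ultimately show ?thesis unfolding V_def d_def by (meson diff_right_mono order.trans)
        qed
        then have "C x - C y + V y \<le> C x - C y + d" by (simp add: add_left_mono)
        finally show "C y \<le> C x - ?t + d" by (simp add: algebra_simps)
      qed
      then have "?t \<le> d" using CG[OF G] by (simp add: algebra_simps)
      then show "?t + Qop AA A x \<le> piD_pos G A x" unfolding d_def by (simp add: le_diff_eq)
    qed
    then have "?t + Qop AA A x \<le> Qop AA A x" by (rule Q_greatest)
    then show "?t \<le> 0" by simp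
  qed
qed

lemma compl_in_orth: fixes T :: "'a \<Rightarrow> 'b::{ordered_real_vector,conditionally_complete_lattice}" assumes T: "T \<in> uryson"
  shows "(\<lambda>x. T x - Pop AA T x) \<in> uorth (uorth (U_fam AA))"
proof -
  let ?B = "uorth (U_fam AA)"
  have Bu: "?B \<subseteq> uryson" using uorth_ury by blast
  have p: "upos_op (upos T)" "upos_op (uneg T)"
    using upos_ury[OF T] upos_ge[OF T] uneg_ury[OF T] uneg_nonneg[OF T] upos_op_def by auto
  define E1 where "E1 = (\<lambda>x. upos T x - Qop AA (upos T) x)"
  define E2 where "E2 = (\<lambda>x. uneg T x - Qop AA (uneg T) x)"
  have E1: "upos_op E1" unfolding E1_def upos_op_def
    using ury_minus[OF upos_ury[OF T]] Q_upos[OF AAadm p(1)] Q_le[OF p(1)] upos_op_def by auto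
  have E2: "upos_op E2" unfolding E2_def upos_op_def
    using ury_minus[OF uneg_ury[OF T]] Q_upos[OF AAadm p(2)] Q_le[OF p(2)] upos_op_def by auto
  have E1u: "E1 \<in> uryson" and E2u: "E2 \<in> uryson" using E1 E2 upos_op_def by auto
  have eq: "(\<lambda>x. T x - Pop AA T x) = (\<lambda>x. E1 x + (-1) *\<^sub>R E2 x)"
    unfolding E1_def E2_def Pop_def using upos_uneg[OF T] by (auto simp: algebra_simps)
  have Tu2: "(\<lambda>x. T x - Pop AA T x) \<in> uryson" unfolding eq using ury_plus[OF E1u ury_scale[OF E2u]] .
  show ?thesis
  proof (rule uorth_I[OF Tu2 Bu])
    fix W :: "'a \<Rightarrow> 'b" assume W: "W \<in> ?B"
    have Wu: "W \<in> uryson" using W Bu by blast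
    have "perp0 (uabs W) (\<lambda>x. E1 x + E2 x)"
      using perp0_add[OF upos_op_uabs[OF Wu] E1 E2] K_lemma[OF p(1) W] K_lemma[OF p(2) W]
      unfolding E1_def E2_def by blast
    moreover have "\<And>x. uabs (\<lambda>x. E1 x + (-1) *\<^sub>R E2 x) x \<le> E1 x + E2 x"
    proof -
      fix x
      have "uabs (\<lambda>x. E1 x + (-1) *\<^sub>R E2 x) x \<le> uabs E1 x + uabs (\<lambda>x. (-1) *\<^sub>R E2 x) x"
        by (rule uabs_triangle[OF E1u ury_scale[OF E2u]])
      also have "uabs (\<lambda>x. (-1) *\<^sub>R E2 x) x \<le> uabs E2 x" using uabs_scale[OF E2u, of "-1" x] by simp
      also have "uabs E1 = E1" using uabs_pos[OF E1u] E1 unfolding upos_op_def by blast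
      also have "uabs E2 = E2" using uabs_pos[OF E2u] E2 unfolding upos_op_def by blast
      finally show "uabs (\<lambda>x. E1 x + (-1) *\<^sub>R E2 x) x \<le> E1 x + E2 x" by (simp add: add_left_mono)
    qed
    ultimately show "perp0 (uabs W) (uabs (\<lambda>x. T x - Pop AA T x))"
      unfolding eq using perp0_mono[OF upos_op_uabs[OF Wu] upos_op_plus[OF E1 E2]
        upos_op_uabs[OF ury_plus[OF E1u ury_scale[OF E2u]]]] by blast
  qed
qed

end


context
  fixes AA :: "'a::{ordered_real_vector,lattice} set set"
  assumes AAadm: "AA \<subseteq> Collect admissible" and AAup: "upward_saturated AA"
begin

lemma B_order_closed:
  fixes T :: "'a \<Rightarrow> 'b::{ordered_real_vector,conditionally_complete_lattice}"
  assumes sub: "A' \<subseteq> uorth (U_fam AA)" and lub: "is_lub_U A' T"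
  shows "T \<in> uorth (U_fam AA)"
proof -
  let ?B = "uorth (U_fam AA) :: ('a \<Rightarrow> 'b) set"
  have Bu: "?B \<subseteq> uryson" using uorth_ury by blast
  have Tu: "T \<in> uryson" using lub is_lub_U_def by blast
  define PT where "PT = Pop AA T"
  define C where "C = (\<lambda>x. T x - PT x)"
  have PB: "PT \<in> ?B" unfolding PT_def by (rule P_in_B[OF AAadm AAup Tu])
  have CB: "C \<in> uorth ?B" unfolding C_def PT_def by (rule compl_in_orth[OF AAadm AAup Tu])
  have PTu: "PT \<in> uryson" using PB Bu by blast
  have Cu: "C \<in> uryson" using CB uorth_ury by blast
  have "C = (\<lambda>x. 0)"
  proof (cases "A' = {}")
    case True
    have "(\<lambda>x. T x - uabs C x) \<in> uryson" using ury_minus[OF Tu uabs_ury[OF Cu]] .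
    then have "op_le T (\<lambda>x. T x - uabs C x)" using lub True unfolding is_lub_U_def by blast
    then have "\<And>x. uabs C x \<le> 0" unfolding op_le_def op_pos_def by simp
    then have "uabs C = (\<lambda>x. 0)" using uabs_nonneg[OF Cu] by (auto intro!: ext order.antisym)
    then show ?thesis using uabs_eq0[OF Cu] by blast
  next
    case False
    have key: "\<And>a. a \<in> A' \<Longrightarrow> (\<forall>x. 0 \<le> PT x - a x) \<and> (\<forall>x. 0 \<le> C x)"
    proof -
      fix a assume a: "a \<in> A'"
      have aB: "a \<in> ?B" using a sub by blast
      have au: "a \<in> uryson" using aB Bu by blast
      have aT: "op_le a T" using lub a unfolding is_lub_U_def by blast
      have V: "upos_op (\<lambda>x. T x - a x)" using ury_minus[OF Tu au] aT
        unfolding upos_op_def op_le_def op_pos_def by simp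
      have E1B: "(\<lambda>x. PT x - a x) \<in> ?B" using uorth_minus[OF Ufam_ury PB aB] .
      have d: "udisj (\<lambda>x. PT x - a x) C" using CB E1B unfolding uorth_def by blast
      have "\<And>x. 0 \<le> PT x - a x" "\<And>x. 0 \<le> C x"
        using split_pos[OF V ury_minus[OF PTu au] Cu _ d] unfolding C_def by (simp_all add: algebra_simps)
      then show "(\<forall>x. 0 \<le> PT x - a x) \<and> (\<forall>x. 0 \<le> C x)" by blast
    qed
    have "\<forall>a\<in>A'. op_le a PT" using key unfolding op_le_def op_pos_def by blast
    then have "op_le T PT" using lub PTu unfolding is_lub_U_def by blast
    then have le: "\<And>x. C x \<le> 0" unfolding op_le_def op_pos_def C_def by simp
    obtain a where "a \<in> A'" using False by blast
    then have ge: "\<And>x. 0 \<le> C x" using key by blast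
    show ?thesis using le ge by (auto intro!: ext order.antisym)
  qed
  then have "T = PT" unfolding C_def by (simp add: fun_eq_iff)
  then show ?thesis using PB by simp
qed

lemma B_band: "uband (uorth (U_fam AA) :: ('a \<Rightarrow> 'b::{ordered_real_vector,conditionally_complete_lattice}) set)"
  unfolding uband_def
proof (intro conjI ballI allI impI)
  let ?B = "uorth (U_fam AA) :: ('a \<Rightarrow> 'b) set"
  show "?B \<subseteq> uryson" using uorth_ury by blast
  show "(\<lambda>x. 0) \<in> ?B" by (rule uorth_zero[OF Ufam_ury])
  fix S T assume "S \<in> ?B" "T \<in> ?B"
  then show "(\<lambda>x. S x + T x) \<in> ?B" by (rule uorth_plus[OF Ufam_ury])
next
  let ?B = "uorth (U_fam AA) :: ('a \<Rightarrow> 'b) set"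
  fix c and S assume "S \<in> ?B"
  then show "(\<lambda>x. c *\<^sub>R S x) \<in> ?B" by (rule uorth_scale[OF Ufam_ury])
next
  let ?B = "uorth (U_fam AA) :: ('a \<Rightarrow> 'b) set"
  fix S T assume "S \<in> uryson" "T \<in> ?B" "op_le (uabs S) (uabs T)"
  then show "S \<in> ?B" by (rule uorth_solid[OF Ufam_ury])
next
  let ?B = "uorth (U_fam AA) :: ('a \<Rightarrow> 'b) set"
  fix A' T assume "A' \<subseteq> ?B \<and> is_lub_U A' T"
  then show "T \<in> ?B" using B_order_closed by blast
qed

lemma P_proj: "proj_onto (Pop AA) (uorth (U_fam AA) :: ('a \<Rightarrow> 'b::{ordered_real_vector,conditionally_complete_lattice}) set)"
  unfolding proj_onto_def using P_in_B[OF AAadm AAup] compl_in_orth[OF AAadm AAup] by blast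

lemma P_pos: fixes T :: "'a \<Rightarrow> 'b::{ordered_real_vector,conditionally_complete_lattice}"
  assumes T: "T \<in> uryson" and p: "op_pos T" shows "Pop AA T = Qop AA T"
  using p unfolding Pop_def op_pos_def upos_pos[OF T] uneg_pos[OF T] Q_zero
  by (simp add: upos_pos[OF T] uneg_pos[OF T] Q_zero)

lemma P_le_piD: assumes D: "D \<in> AA"
  shows "bp_le (Pop AA) (piD D :: ('a \<Rightarrow> 'b::{ordered_real_vector,conditionally_complete_lattice}) \<Rightarrow> _)"
  unfolding bp_le_def
proof (intro ballI impI)
  fix T :: "'a \<Rightarrow> 'b" assume T: "T \<in> uryson" and p: "op_pos T"
  have A: "upos_op T" using T p unfolding upos_op_def op_pos_def by blast
  have "\<And>x. Qop AA T x \<le> piD_pos D T x" using Q_lower[OF A GG_base[OF D]] .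
  then show "op_le (Pop AA T) (piD D T)"
    unfolding P_pos[OF T p] piD_eq_posop[OF T p[unfolded op_pos_def, rule_format]]
    by (simp add: op_le_def op_pos_def)
qed

lemma R_facts:
  fixes R :: "('a \<Rightarrow> 'b::{ordered_real_vector,conditionally_complete_lattice}) \<Rightarrow> ('a \<Rightarrow> 'b)"
  assumes R: "band_proj R" and T: "T \<in> uryson" and p: "op_pos T"
  shows "upos_op (R T)" "\<And>x. R T x \<le> T x" "R (R T) = R T"
proof -
  obtain B' where B': "uband B'" "proj_onto R B'" using R band_proj_def by blast
  have B'u: "B' \<subseteq> uryson" using B'(1) unfolding uband_def by (elim conjE) assumption
  have RTB: "R T \<in> B'" and RTo: "(\<lambda>x. T x - R T x) \<in> uorth B'" using B'(2) T unfolding proj_onto_def by auto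
  have RTu: "R T \<in> uryson" using RTB B'u by blast
  have d: "udisj (R T) (\<lambda>x. T x - R T x)" using RTo RTB unfolding uorth_def by blast
  have V: "upos_op T" using T p unfolding upos_op_def op_pos_def by blast
  have sp: "\<And>x. 0 \<le> R T x" "\<And>x. 0 \<le> T x - R T x"
    using split_pos[OF V RTu ury_minus[OF T RTu] _ d] by simp_all
  show "upos_op (R T)" using RTu sp(1) upos_op_def by blast
  show "\<And>x. R T x \<le> T x" using sp(2) by simp
  have RRB: "R (R T) \<in> B'" and RRo: "(\<lambda>x. R T x - R (R T) x) \<in> uorth B'" using B'(2) RTu unfolding proj_onto_def by auto
  define X where "X = (\<lambda>x. R T x - R (R T) x)"
  have plusB: "\<forall>S\<in>B'. \<forall>T\<in>B'. (\<lambda>x. S x + T x) \<in> B'"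
    using B'(1) unfolding uband_def by (elim conjE) assumption
  have scaleB: "\<forall>c. \<forall>S\<in>B'. (\<lambda>x. c *\<^sub>R S x) \<in> B'"
    using B'(1) unfolding uband_def by (elim conjE) assumption
  have "(\<lambda>x. (-1) *\<^sub>R R (R T) x) \<in> B'" by (rule scaleB[rule_format, OF RRB])
  then have "(\<lambda>x. R T x + (-1) *\<^sub>R R (R T) x) \<in> B'" by (rule plusB[rule_format, OF RTB])
  then have XB: "X \<in> B'" unfolding X_def by simp
  have Xu: "X \<in> uryson" using XB B'u by blast
  have "udisj X X" using RRo XB unfolding uorth_def X_def by blast
  then have "uinf (uabs X) (uabs X) = (\<lambda>x. 0)" unfolding udisj_def .
  moreover have "uinf (uabs X) (uabs X) = uabs X" using uabs_ury[OF Xu] by (rule uinf_le) (simp add: op_le_def op_pos_def)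
  ultimately have "X = (\<lambda>x. 0)" using uabs_eq0[OF Xu] by simp
  then show "R (R T) = R T" unfolding X_def by (simp add: fun_eq_iff)
qed

lemma maximal:
  fixes R :: "('a \<Rightarrow> 'b::{ordered_real_vector,conditionally_complete_lattice}) \<Rightarrow> ('a \<Rightarrow> 'b)"
  assumes R: "band_proj R" and hyp: "\<And>D. D \<in> AA \<Longrightarrow> bp_le R (piD D)"
  shows "bp_le R (Pop AA)"
  unfolding bp_le_def
proof (intro ballI impI)
  fix T :: "'a \<Rightarrow> 'b" assume T: "T \<in> uryson" and p: "op_pos T"
  have main: "\<And>G. G \<in> GGof AA \<Longrightarrow> \<forall>T. T \<in> uryson \<longrightarrow> op_pos T \<longrightarrow> (\<forall>x. R T x \<le> piD_pos G T x)"
  proof -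
    fix G assume G: "G \<in> GGof AA"
    show "\<forall>T. T \<in> uryson \<longrightarrow> op_pos T \<longrightarrow> (\<forall>x. R T x \<le> piD_pos G T x)"
    proof (rule GG_induct[OF G, where P="\<lambda>G. \<forall>T. T \<in> uryson \<longrightarrow> op_pos T \<longrightarrow> (\<forall>x. R T x \<le> piD_pos G T x)"])
      show "\<forall>T. T \<in> uryson \<longrightarrow> op_pos T \<longrightarrow> (\<forall>x. R T x \<le> piD_pos UNIV T x)"
      proof (intro allI impI)
        fix T :: "'a \<Rightarrow> 'b" and x assume T: "T \<in> uryson" and p: "op_pos T"
        have A: "upos_op T" using T p unfolding upos_op_def op_pos_def by blast
        show "R T x \<le> piD_pos UNIV T x" using R_facts(2)[OF R T p] piD_univ[OF A] by simp
      qed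
    next
      fix D G' assume D: "D \<in> AA" and G': "G' \<in> GGof AA"
        and IH: "\<forall>T. T \<in> uryson \<longrightarrow> op_pos T \<longrightarrow> (\<forall>x. R T x \<le> piD_pos G' T x)"
      show "\<forall>T. T \<in> uryson \<longrightarrow> op_pos T \<longrightarrow> (\<forall>x. R T x \<le> piD_pos (D \<inter> G') T x)"
      proof (intro allI impI)
        fix T :: "'a \<Rightarrow> 'b" and x assume T: "T \<in> uryson" and p: "op_pos T"
        have A: "upos_op T" using T p unfolding upos_op_def op_pos_def by blast
        have RT: "upos_op (R T)" using R_facts(1)[OF R T p] .
        have RTu: "R T \<in> uryson" and RTp: "op_pos (R T)" using RT unfolding upos_op_def op_pos_def by auto
        have Dadm: "admissible D" using D AAadm by blast
        have Gadm: "admissible G'" using GG_adm[OF AAadm G'] .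
        have "R (R T) x \<le> piD D (R T) x" using hyp[OF D] RTu RTp unfolding bp_le_def op_le_def op_pos_def by auto
        then have "R T x \<le> piD_pos D (R T) x"
          using R_facts(3)[OF R T p] piD_eq_posop[OF RTu RTp[unfolded op_pos_def, rule_format]] by simp
        also have "\<dots> \<le> piD_pos D (piD_pos G' T) x"
          using IH T p by (intro piD_mono_op[OF RT piD_upos[OF A Gadm]]) auto
        also have "\<dots> = piD_pos (D \<inter> G') T x" using piD_comp[OF A Dadm Gadm] .
        finally show "R T x \<le> piD_pos (D \<inter> G') T x" .
      qed
    qed
  qed
  have A: "upos_op T" using T p unfolding upos_op_def op_pos_def by blast
  have "\<And>x. R T x \<le> Qop AA T x"
    using main T p by (intro Q_greatest) blast
  then show "op_le (R T) (Pop AA T)" unfolding P_pos[OF T p] op_le_def op_pos_def by simp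
qed

end

theorem mainTheorem6:
  fixes AA :: "'a::{ordered_real_vector,lattice} set set"
  assumes "AA \<subseteq> Collect admissible"
    and "upward_saturated AA"
  shows "\<exists>P :: ('a \<Rightarrow> 'b::{ordered_real_vector,conditionally_complete_lattice}) \<Rightarrow> ('a \<Rightarrow> 'b).
           is_inf_bp {piD D | D. D \<in> AA} P \<and> proj_onto P (uorth (U_fam AA))"
proof (intro exI conjI)
  have bp: "band_proj (Pop AA :: ('a \<Rightarrow> 'b) \<Rightarrow> ('a \<Rightarrow> 'b))"
    unfolding band_proj_def using B_band[OF assms] P_proj[OF assms] by blast
  show "proj_onto (Pop AA :: ('a \<Rightarrow> 'b) \<Rightarrow> ('a \<Rightarrow> 'b)) (uorth (U_fam AA))" using P_proj[OF assms] .
  show "is_inf_bp {piD D | D. D \<in> AA} (Pop AA :: ('a \<Rightarrow> 'b) \<Rightarrow> ('a \<Rightarrow> 'b))"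
    unfolding is_inf_bp_def
  proof (intro conjI ballI allI impI)
    show "band_proj (Pop AA :: ('a \<Rightarrow> 'b) \<Rightarrow> ('a \<Rightarrow> 'b))" using bp .
    fix Q assume "Q \<in> {piD D | D. D \<in> AA}"
    then obtain D where "D \<in> AA" "Q = piD D" by blast
    then show "bp_le (Pop AA) Q" using P_le_piD[OF assms] by blast
  next
    fix R :: "('a \<Rightarrow> 'b) \<Rightarrow> ('a \<Rightarrow> 'b)"
    assume "band_proj R \<and> (\<forall>Q\<in>{piD D | D. D \<in> AA}. bp_le R Q)"
    then show "bp_le R (Pop AA)" using maximal[OF assms] by blast
  qed
qed


end
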